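(* Let $\mu$ be a Borel measure on $\mathbb{R}$ with finite moments, $x_0\in\mathbb{R}$, $0<\alpha<1$, and $g(x)=(x-{\rm i})^{-1}$. Then for every $f\in\mathcal{L}_w$ and every $n\in\mathbb{N}$, $$\operatorname{Var}X^{(n)}_{f,\alpha,x_0}\le\|f\|^2_{\mathcal{L}_w}\operatorname{Var}X^{(n)}_{g,\alpha,x_0}.$$
   Context: $\mathcal{L}_w$ is the space of functions $f:\mathbb{R}\to\mathbb{R}$ with $\lim_{x\to-\infty}f(x)=0$ and $\|f\|_{\mathcal{L}_w}:=\sup_{x\ne y}\sqrt{1+x^2}\sqrt{1+y^2}\left|\frac{f(x)-f(y)}{x-y}\right|<\infty$. The OPE of size $n$ is the probability measure on $\mathbb{R}^n$ proportional to $\prod_{i<j}(x_i-x_j)^2\,{\rm d}\mu(x_1)\cdots{\rm d}\mu(x_n)$, and $X^{(n)}_{h,\alpha,x_0}=\sum_{j=1}^nh(n^\alpha(x_j-x_0))$. For complex-valued $h$, $\operatorname{Var}X=\mathbb{E}|X-\mathbb{E}X|^2$. *)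

theory Defs
  imports "HOL-Probability.Probability"
begin

text \<open>Points of R^n are functions nat => real, restricted to the index set {..<n}.\<close>

definition ope_weight :: "nat \<Rightarrow> (nat \<Rightarrow> real) \<Rightarrow> real" where
  "ope_weight n x = (\<Prod>(i,j)\<in>{(i,j). i < j \<and> j < n}. (x i - x j)^2)"

definition ope_base :: "real measure \<Rightarrow> nat \<Rightarrow> (nat \<Rightarrow> real) measure" where
  "ope_base \<mu> n = PiM {..<n} (\<lambda>_. \<mu>)"

definition ope_partition :: "real measure \<Rightarrow> nat \<Rightarrow> real" where
  "ope_partition \<mu> n = (\<integral>x. ope_weight n x \<partial>ope_base \<mu> n)"

definition OPE :: "real measure \<Rightarrow> nat \<Rightarrow> (nat \<Rightarrow> real) measure" where
  "OPE \<mu> n = density (ope_base \<mu> n)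
      (\<lambda>x. ennreal (ope_weight n x / ope_partition \<mu> n))"

definition lin_stat :: "(real \<Rightarrow> complex) \<Rightarrow> real \<Rightarrow> real \<Rightarrow> nat \<Rightarrow> (nat \<Rightarrow> real) \<Rightarrow> complex" where
  "lin_stat h \<alpha> x0 n x = (\<Sum>j<n. h (real n powr \<alpha> * (x j - x0)))"

definition cvariance :: "'a measure \<Rightarrow> ('a \<Rightarrow> complex) \<Rightarrow> real" where
  "cvariance M X = (\<integral>x. (cmod (X x - (\<integral>y. X y \<partial>M)))^2 \<partial>M)"

definition Lw_quot_set :: "(real \<Rightarrow> real) \<Rightarrow> real set" where
  "Lw_quot_set f = {sqrt (1 + x^2) * sqrt (1 + y^2) * \<bar>(f x - f y) / (x - y)\<bar> | x y. x \<noteq> y}"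

definition Lw_norm :: "(real \<Rightarrow> real) \<Rightarrow> real" where
  "Lw_norm f = Sup (Lw_quot_set f)"

definition Lw :: "(real \<Rightarrow> real) set" where
  "Lw = {f. (f \<longlongrightarrow> 0) at_bot \<and> bdd_above (Lw_quot_set f)}"

definition finite_moments :: "real measure \<Rightarrow> bool" where
  "finite_moments \<mu> \<longleftrightarrow> (\<forall>k::nat. integrable \<mu> (\<lambda>x. x ^ k))"

end

theory Submission
  imports Defs "Jordan_Normal_Form.Determinant" "HOL-Computational_Algebra.Polynomial"
begin

lemma det_row_scale:
  fixes c :: "nat \<Rightarrow> 'a::comm_ring_1"
  shows "Determinant.det (mat n n (\<lambda>(j,k). c j * a j k)) = (\<Prod>j<n. c j) * Determinant.det (mat n n (\<lambda>(j,k). a j k))"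
proof -
  have "Determinant.det (mat n n (\<lambda>(j,k). c j * a j k)) =
     (\<Sum>p | p permutes {0..<n}. of_int (sign p) * (\<Prod>i = 0..<n. c i * a i (p i)))"
    unfolding Determinant.det_def by (auto intro!: sum.cong prod.cong simp: permutes_in_image)
  also have "\<dots> = (\<Sum>p | p permutes {0..<n}. (\<Prod>j<n. c j) * (of_int (sign p) * (\<Prod>i = 0..<n. a i (p i))))"
    by (intro sum.cong refl) (simp add: prod.distrib atLeast0LessThan mult_ac)
  also have "\<dots> = (\<Prod>j<n. c j) * Determinant.det (mat n n (\<lambda>(j,k). a j k))"
    unfolding Determinant.det_def sum_distrib_left[symmetric]
    by (auto intro!: sum.cong prod.cong arg_cong[where f="\<lambda>x. _ * x"] simp: permutes_in_image)
  finally show ?thesis .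
qed

lemma vandermonde_det:
  fixes x :: "nat \<Rightarrow> 'a::comm_ring_1"
  shows "Determinant.det (mat n n (\<lambda>(j,k). x j ^ k)) = (\<Prod>j<n. \<Prod>i<j. (x j - x i))"
proof (induction n arbitrary: x)
  case 0
  show ?case by (simp add: det_dim_zero)
next
  case (Suc n)
  define V where "V = mat (Suc n) (Suc n) (\<lambda>(j,k). x j ^ k)"
  define E where "E = mat (Suc n) (Suc n) (\<lambda>(i,k). if i = k then 1 else if k = Suc i then - x 0 else (0::'a))"
  have Vc: "V \<in> carrier_mat (Suc n) (Suc n)" and Ec: "E \<in> carrier_mat (Suc n) (Suc n)"
    unfolding V_def E_def by auto
  have "upper_triangular E" unfolding E_def upper_triangular_def by auto
  moreover have "diag_mat E = map (\<lambda>_. 1) [0..<Suc n]"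
    unfolding diag_mat_def E_def by auto
  ultimately have detE: "Determinant.det E = 1"
    using det_upper_triangular[OF _ Ec] by (simp add: map_replicate_const)
  have B: "V * E = mat (Suc n) (Suc n) (\<lambda>(j,k). if k = 0 then 1 else x j ^ k - x 0 * x j ^ (k - 1))"
  proof (rule eq_matI)
    fix j k assume j: "j < dim_row (mat (Suc n) (Suc n) (\<lambda>(j,k). if k = 0 then 1 else x j ^ k - x 0 * x j ^ (k - 1)) :: 'a mat)"
      and k: "k < dim_col (mat (Suc n) (Suc n) (\<lambda>(j,k). if k = 0 then 1 else x j ^ k - x 0 * x j ^ (k - 1)) :: 'a mat)"
    have "(V * E) $$ (j, k) = (\<Sum>i<Suc n. x j ^ i * (if i = k then 1 else if k = Suc i then - x 0 else 0))"
      using j k unfolding V_def E_def by (auto simp: scalar_prod_def atLeast0LessThan intro!: sum.cong)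
    also have "\<dots> = (\<Sum>i<Suc n. (if i = k then x j ^ i else 0)) + (\<Sum>i<Suc n. (if Suc i = k then - x 0 * x j ^ i else 0))"
      by (subst sum.distrib[symmetric]) (auto intro!: sum.cong)
    also have "\<dots> = (if k = 0 then 1 else x j ^ k - x 0 * x j ^ (k - 1))"
      using k by (cases k) (auto simp: sum.delta)
    finally show "(V * E) $$ (j, k) = mat (Suc n) (Suc n) (\<lambda>(j,k). if k = 0 then 1 else x j ^ k - x 0 * x j ^ (k - 1)) $$ (j, k)"
      using j k by simp
  qed (auto simp: V_def E_def)
  define B where "B = mat (Suc n) (Suc n) (\<lambda>(j,k). if k = 0 then 1 else x j ^ k - x 0 * x j ^ (k - 1))"
  have Bc: "B \<in> carrier_mat (Suc n) (Suc n)" unfolding B_def by auto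
  have "Determinant.det V = Determinant.det (V * E)"
    using det_mult[OF Vc Ec] detE by simp
  also have "\<dots> = Determinant.det B" using B B_def by simp
  also have "\<dots> = (\<Sum>k<Suc n. B $$ (0, k) * cofactor B 0 k)"
    by (rule laplace_expansion_row[OF Bc]) simp
  also have "\<dots> = cofactor B 0 0"
    by (subst sum.remove[of _ 0]) (auto simp: B_def power_eq_if intro!: sum.neutral)
  also have "\<dots> = Determinant.det (mat_delete B 0 0)" by (simp add: cofactor_def)
  also have "mat_delete B 0 0 = mat n n (\<lambda>(j,k). (x (Suc j) - x 0) * (x (Suc j) ^ k))"
  proof (rule eq_matI)
    fix j k assume j: "j < dim_row (mat n n (\<lambda>(j,k). (x (Suc j) - x 0) * (x (Suc j) ^ k)) :: 'a mat)"
      and k: "k < dim_col (mat n n (\<lambda>(j,k). (x (Suc j) - x 0) * (x (Suc j) ^ k)) :: 'a mat)"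
    have "mat_delete B 0 0 $$ (j, k) = B $$ (insert_index 0 j, insert_index 0 k)"
      using mat_delete_index[OF Bc, of 0 0 j k] j k by simp
    also have "\<dots> = (x (Suc j) - x 0) * (x (Suc j) ^ k)"
      using j k by (simp add: B_def algebra_simps)
    finally show "mat_delete B 0 0 $$ (j, k) = mat n n (\<lambda>(j,k). (x (Suc j) - x 0) * (x (Suc j) ^ k)) $$ (j, k)"
      using j k by simp
  qed (auto simp: B_def)
  also have "Determinant.det (mat n n (\<lambda>(j,k). (x (Suc j) - x 0) * (x (Suc j) ^ k)))
     = (\<Prod>j<n. (x (Suc j) - x 0)) * Determinant.det (mat n n (\<lambda>(j,k). (x (Suc j) ^ k)))"
    by (rule det_row_scale)
  also have "Determinant.det (mat n n (\<lambda>(j,k). (x (Suc j) ^ k))) = (\<Prod>j<n. \<Prod>i<j. (x (Suc j) - x (Suc i)))"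
    using Suc.IH[of "\<lambda>j. x (Suc j)"] by simp
  also have "(\<Prod>j<n. (x (Suc j) - x 0)) * (\<Prod>j<n. \<Prod>i<j. (x (Suc j) - x (Suc i))) = (\<Prod>j<Suc n. \<Prod>i<j. (x j - x i))"
    by (simp only: prod.lessThan_Suc_shift) (simp add: prod.distrib del: prod.lessThan_Suc)
  finally show ?case unfolding V_def .
qed
lemma det_monic_polys:
  fixes \<phi> :: "nat \<Rightarrow> 'a::comm_ring_1 poly"
  assumes deg: "\<And>i. i < n \<Longrightarrow> degree (\<phi> i) \<le> i" and lc: "\<And>i. i < n \<Longrightarrow> coeff (\<phi> i) i = 1"
  shows "Determinant.det (mat n n (\<lambda>(j,i). poly (\<phi> i) (x j))) = Determinant.det (mat n n (\<lambda>(j,k). x j ^ k))"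
proof -
  define V where "V = mat n n (\<lambda>(j,k). x j ^ k)"
  define U where "U = mat n n (\<lambda>(k,i). coeff (\<phi> i) k)"
  have Vc: "V \<in> carrier_mat n n" and Uc: "U \<in> carrier_mat n n" unfolding V_def U_def by auto
  have "upper_triangular U" unfolding U_def upper_triangular_def
    apply (auto intro!: coeff_eq_0) by (meson deg le_less_trans less_trans)
  moreover have "diag_mat U = map (\<lambda>_. 1) [0..<n]"
    unfolding diag_mat_def U_def using lc by auto
  ultimately have detU: "Determinant.det U = 1"
    using det_upper_triangular[OF _ Uc] by (simp add: map_replicate_const)
  have "V * U = mat n n (\<lambda>(j,i). poly (\<phi> i) (x j))"
  proof (rule eq_matI)
    fix j i assume j: "j < dim_row (mat n n (\<lambda>(j,i). poly (\<phi> i) (x j)))" and i: "i < dim_col (mat n n (\<lambda>(j,i). poly (\<phi> i) (x j)))"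
    have "(V * U) $$ (j, i) = (\<Sum>k<n. coeff (\<phi> i) k * x j ^ k)"
      using j i unfolding V_def U_def by (auto simp: scalar_prod_def atLeast0LessThan mult.commute intro!: sum.cong)
    also have "\<dots> = (\<Sum>k\<le>degree (\<phi> i). coeff (\<phi> i) k * x j ^ k)"
    proof (rule sum.mono_neutral_right)
      show "{..degree (\<phi> i)} \<subseteq> {..<n}" using deg[of i] i by auto
    qed (auto simp: coeff_eq_0)
    also have "\<dots> = poly (\<phi> i) (x j)" by (simp add: poly_altdef)
    finally show "(V * U) $$ (j, i) = mat n n (\<lambda>(j,i). poly (\<phi> i) (x j)) $$ (j, i)" using i j by simp
  qed (auto simp: V_def U_def)
  then show ?thesis using det_mult[OF Vc Uc] detU V_def by simp
qed

lemma det_leibniz: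
  "Determinant.det (mat n n (\<lambda>(j,i). a j i)) = (\<Sum>p | p permutes {..<n}. of_int (sign p) * (\<Prod>j<n. a j (p j)))"
  unfolding Determinant.det_def by (auto intro!: sum.cong prod.cong simp: permutes_in_image atLeast0LessThan)

lemma prod_pairs:
  fixes n :: nat
  shows "(\<Prod>(i,j)\<in>{(i,j). i < j \<and> j < n}. g i j) = (\<Prod>j<n. \<Prod>i<j. g i j)"
proof -
  have "{(i,j). i < j \<and> j < n} = (\<lambda>(j,i). (i,j)) ` (SIGMA j:{..<n}. {..<j})" by auto
  moreover have "inj_on (\<lambda>(j,i). (i::nat,j::nat)) (SIGMA j:{..<n}. {..<j})" by (auto simp: inj_on_def)
  ultimately show ?thesis by (simp add: prod.reindex prod.Sigma case_prod_beta')
qed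

lemma ope_weight_det:
  fixes \<phi> :: "nat \<Rightarrow> real poly"
  assumes deg: "\<And>i. i < n \<Longrightarrow> degree (\<phi> i) \<le> i" and lc: "\<And>i. i < n \<Longrightarrow> coeff (\<phi> i) i = 1"
  shows "ope_weight n x = (\<Sum>p | p permutes {..<n}. of_int (sign p) * (\<Prod>j<n. poly (\<phi> (p j)) (x j)))^2"
proof -
  have "ope_weight n x = (\<Prod>j<n. \<Prod>i<j. (x i - x j)^2)"
    unfolding ope_weight_def by (rule prod_pairs)
  also have "\<dots> = (\<Prod>j<n. \<Prod>i<j. (x j - x i))^2"
    by (simp add: power_mult_distrib[symmetric] prod_power_distrib power2_commute)
  also have "\<dots> = (Determinant.det (mat n n (\<lambda>(j,i). poly (\<phi> i) (x j))))^2"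
    using det_monic_polys[OF deg lc, of n x] vandermonde_det[of n x] by simp
  finally show ?thesis by (simp add: det_leibniz)
qed

function gs :: "real measure \<Rightarrow> nat \<Rightarrow> real poly" where
  "gs M i = monom 1 i - (\<Sum>j<i. Polynomial.smult ((\<integral>t. t^i * poly (gs M j) t \<partial>M) / (\<integral>t. (poly (gs M j) t)^2 \<partial>M)) (gs M j))"
  by auto
termination by (relation "Wellfounded.measure snd") auto

declare gs.simps[simp del]

locale ope_setup =
  fixes \<mu> :: "real measure"
  assumes sets_mu: "sets \<mu> = sets borel"
    and moments: "\<And>k::nat. integrable \<mu> (\<lambda>x. x^k)"
begin

lemma meas_mu: "measurable \<mu> N = measurable borel N"
  by (rule measurable_cong_sets) (auto simp: sets_mu)

lemma finite_mu: "finite_measure \<mu>"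
proof -
  have "integrable \<mu> (\<lambda>_. 1::real)" using moments[of 0] by simp
  then have "(\<integral>\<^sup>+x. ennreal (norm (1::real)) \<partial>\<mu>) < \<infinity>" by (simp add: integrable_iff_bounded)
  then show ?thesis by (auto intro!: finite_measureI simp: less_top)
qed

sublocale finite_measure \<mu> by (rule finite_mu)

lemma poly_meas[measurable]: "(\<lambda>t. poly p t) \<in> borel_measurable \<mu>"
  unfolding meas_mu by (intro borel_measurable_continuous_onI continuous_intros)

lemma int_poly: "integrable \<mu> (\<lambda>t. poly p t)"
proof -
  have "integrable \<mu> (\<lambda>t. \<Sum>k\<le>degree p. coeff p k * t ^ k)"
    using moments by (intro Bochner_Integration.integrable_sum integrable_mult_right) auto
  then show ?thesis by (simp add: poly_altdef)
qed

lemma int_poly_bdd: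
  fixes w :: "real \<Rightarrow> 'b::{banach,second_countable_topology,real_normed_algebra}"
  assumes w: "w \<in> borel_measurable borel" and B: "\<And>t. norm (w t) \<le> B"
  shows "integrable \<mu> (\<lambda>t. poly p t *\<^sub>R w t)"
proof (rule Bochner_Integration.integrable_bound)
  show "integrable \<mu> (\<lambda>t. B * \<bar>poly p t\<bar>)" using int_poly by auto
  show "(\<lambda>t. poly p t *\<^sub>R w t) \<in> borel_measurable \<mu>"
    using w unfolding meas_mu[symmetric] by measurable
  show "AE t in \<mu>. norm (poly p t *\<^sub>R w t) \<le> norm (B * \<bar>poly p t\<bar>)"
  proof (intro AE_I2)
    fix t
    have "B \<ge> 0" using B[of t] norm_ge_zero[of "w t"] by linarith
    then show "norm (poly p t *\<^sub>R w t) \<le> norm (B * \<bar>poly p t\<bar>)"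
      using B[of t] by (simp add: abs_mult) (metis abs_ge_zero mult.commute mult_right_mono)
  qed
qed

lemma int_pp: "integrable \<mu> (\<lambda>t. poly p t * poly q t)"
  using int_poly[of "p*q"] by simp

lemma int_xp: "integrable \<mu> (\<lambda>t. t^i * poly q t)"
  using int_poly[of "monom 1 i * q"] by (simp add: poly_monom)

lemma gs_deg: "degree (gs \<mu> i) \<le> i \<and> coeff (gs \<mu> i) i = 1"
proof (induction i rule: less_induct)
  case (less i)
  have dg: "degree (gs \<mu> j) < i" if "j < i" for j
    using less[OF that] that by (meson le_less_trans)
  have d: "degree (Polynomial.smult c (gs \<mu> j)) < i" if "j < i" for c j
    using dg[OF that] by (meson degree_smult_le le_less_trans)
  have "degree (\<Sum>j<i. Polynomial.smult (cc j) (gs \<mu> j)) \<le> i" for cc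
    by (rule degree_sum_le) (use d in \<open>auto intro: less_imp_le simp del: degree_smult_eq\<close>)
  then have "degree (gs \<mu> i) \<le> i"
    by (subst gs.simps) (meson degree_diff_le degree_monom_le)
  moreover have "coeff (\<Sum>j<i. Polynomial.smult (cc j) (gs \<mu> j)) i = 0" for cc
    unfolding coeff_sum using d by (auto intro!: sum.neutral coeff_eq_0 simp del: coeff_smult)
  then have "coeff (gs \<mu> i) i = 1"
    by (subst gs.simps) (simp add: coeff_monom del: coeff_sum)
  ultimately show ?case by simp
qed

lemma int_sq_zero:
  assumes "(\<integral>t. (poly q t)^2 \<partial>\<mu>) = 0"
  shows "(\<integral>t. g t * poly q t \<partial>\<mu>) = 0"
proof -
  have "AE t in \<mu>. (poly q t)^2 = 0"
    using integral_nonneg_eq_0_iff_AE[of \<mu> "\<lambda>t. (poly q t)^2"] assms int_pp[of q q]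
    by (simp add: power2_eq_square)
  then have "AE t in \<mu>. g t * poly q t = 0" by (auto elim!: AE_mp)
  then show ?thesis by (simp add: integral_eq_zero_AE)
qed

lemma gs_orth: "j < i \<Longrightarrow> (\<integral>t. poly (gs \<mu> i) t * poly (gs \<mu> j) t \<partial>\<mu>) = 0"
proof (induction i arbitrary: j rule: less_induct)
  case (less i)
  define p where "p = gs \<mu>"
  define c where "c l = (\<integral>t. t^i * poly (p l) t \<partial>\<mu>) / (\<integral>t. (poly (p l) t)^2 \<partial>\<mu>)" for l
  have pi: "poly (p i) t = t^i - (\<Sum>l<i. c l * poly (p l) t)" for t
    unfolding p_def c_def by (subst gs.simps) (simp add: poly_monom poly_sum)
  have orth: "(\<integral>t. poly (p l) t * poly (p j) t \<partial>\<mu>) = 0" if "l < i" "l \<noteq> j" for l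
  proof (cases "l < j")
    case True
    then show ?thesis using less.IH[of j l] less.prems by (simp add: p_def mult.commute)
  next
    case False
    then show ?thesis using less.IH[of l j] that by (simp add: p_def)
  qed
  have "(\<integral>t. poly (p i) t * poly (p j) t \<partial>\<mu>) =
        (\<integral>t. t^i * poly (p j) t - (\<Sum>l<i. c l * (poly (p l) t * poly (p j) t)) \<partial>\<mu>)"
    unfolding pi by (intro Bochner_Integration.integral_cong refl) (simp add: algebra_simps sum_distrib_left sum_distrib_right)
  also have "\<dots> = (\<integral>t. t^i * poly (p j) t \<partial>\<mu>) - (\<Sum>l<i. c l * (\<integral>t. poly (p l) t * poly (p j) t \<partial>\<mu>))"
    by (simp add: int_xp int_pp Bochner_Integration.integral_sum Bochner_Integration.integrable_sum)
  also have "(\<Sum>l<i. c l * (\<integral>t. poly (p l) t * poly (p j) t \<partial>\<mu>)) = c j * (\<integral>t. poly (p j) t * poly (p j) t \<partial>\<mu>)"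
    using less.prems by (subst sum.remove[of _ j]) (auto simp: orth intro!: sum.neutral)
  also have "c j * (\<integral>t. poly (p j) t * poly (p j) t \<partial>\<mu>) = (\<integral>t. t^i * poly (p j) t \<partial>\<mu>)"
  proof (cases "(\<integral>t. (poly (p j) t)^2 \<partial>\<mu>) = 0")
    case True
    then show ?thesis using int_sq_zero[OF True, of "\<lambda>t. t^i"] by (simp add: c_def)
  next
    case False
    then show ?thesis by (simp add: c_def power2_eq_square)
  qed
  finally show ?case by (simp add: p_def)
qed

end

definition Dp :: "(nat \<Rightarrow> real poly) \<Rightarrow> nat \<Rightarrow> (nat \<Rightarrow> real) \<Rightarrow> real" where
  "Dp \<psi> n x = (\<Sum>p | p permutes {..<n}. of_int (sign p) * (\<Prod>j<n. poly (\<psi> (p j)) (x j)))"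

context ope_setup
begin

definition ip :: "(nat \<Rightarrow> real poly) \<Rightarrow> (real \<Rightarrow> real) \<Rightarrow> nat \<Rightarrow> nat \<Rightarrow> real" where
  "ip \<psi> w a b = (\<integral>t. poly (\<psi> a) t * poly (\<psi> b) t * w t \<partial>\<mu>)"

lemma psf: "product_sigma_finite (\<lambda>_::nat. \<mu>)"
  by (simp add: product_sigma_finite_def sigma_finite_measure_axioms)

lemma int_ppw:
  assumes "w \<in> borel_measurable borel" "\<And>t. \<bar>w t\<bar> \<le> C"
  shows "integrable \<mu> (\<lambda>t. poly P t * poly Q t * w t)"
  using int_poly_bdd[of w C "P*Q"] assms by simp

lemma D2_expand:
  "(Dp \<psi> n x)^2 * (\<Prod>j<n. w j (x j)) =
   (\<Sum>p | p permutes {..<n}. \<Sum>q | q permutes {..<n}. of_int (sign p * sign q) *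
      (\<Prod>j<n. poly (\<psi> (p j)) (x j) * poly (\<psi> (q j)) (x j) * w j (x j)))"
  unfolding Dp_def power2_eq_square sum_product sum_distrib_right
  by (intro sum.cong refl) (simp add: prod.distrib sum_distrib_left mult_ac)

lemma L1:
  fixes w :: "nat \<Rightarrow> real \<Rightarrow> real"
  assumes wm: "\<And>j. w j \<in> borel_measurable borel" and wb: "\<And>j t. \<bar>w j t\<bar> \<le> C"
  shows "integrable (PiM {..<n} (\<lambda>_. \<mu>)) (\<lambda>x. (Dp \<psi> n x)^2 * (\<Prod>j<n. w j (x j)))"
    and "(\<integral>x. (Dp \<psi> n x)^2 * (\<Prod>j<n. w j (x j)) \<partial>PiM {..<n} (\<lambda>_. \<mu>)) =
      (\<Sum>p | p permutes {..<n}. \<Sum>q | q permutes {..<n}. of_int (sign p * sign q) *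
         (\<Prod>j<n. ip \<psi> (w j) (p j) (q j)))"
proof -
  have fin: "finite {p. p permutes {..<n::nat}}" by (simp add: finite_permutations)
  have ipr: "integrable (PiM {..<n} (\<lambda>_. \<mu>)) (\<lambda>x. \<Prod>j<n. poly (\<psi> (p j)) (x j) * poly (\<psi> (q j)) (x j) * w j (x j))" for p q
    by (rule product_sigma_finite.product_integrable_prod[OF psf]) (auto intro: int_ppw[OF wm wb])
  show "integrable (PiM {..<n} (\<lambda>_. \<mu>)) (\<lambda>x. (Dp \<psi> n x)^2 * (\<Prod>j<n. w j (x j)))"
    unfolding D2_expand using ipr fin by (intro Bochner_Integration.integrable_sum integrable_mult_right) auto
  have "(\<integral>x. (Dp \<psi> n x)^2 * (\<Prod>j<n. w j (x j)) \<partial>PiM {..<n} (\<lambda>_. \<mu>)) =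
      (\<Sum>p | p permutes {..<n}. \<Sum>q | q permutes {..<n}. of_int (sign p * sign q) *
         (\<integral>x. (\<Prod>j<n. poly (\<psi> (p j)) (x j) * poly (\<psi> (q j)) (x j) * w j (x j)) \<partial>PiM {..<n} (\<lambda>_. \<mu>)))"
    unfolding D2_expand using ipr fin
    by (simp add: Bochner_Integration.integral_sum Bochner_Integration.integrable_sum)
  also have "\<dots> = (\<Sum>p | p permutes {..<n}. \<Sum>q | q permutes {..<n}. of_int (sign p * sign q) *
         (\<Prod>j<n. ip \<psi> (w j) (p j) (q j)))"
    unfolding ip_def
    by (intro sum.cong refl arg_cong[where f="\<lambda>x. _ * x"] product_sigma_finite.product_integral_prod[OF psf])
       (auto intro: int_ppw[OF wm wb])
  finally show "(\<integral>x. (Dp \<psi> n x)^2 * (\<Prod>j<n. w j (x j)) \<partial>PiM {..<n} (\<lambda>_. \<mu>)) =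
      (\<Sum>p | p permutes {..<n}. \<Sum>q | q permutes {..<n}. of_int (sign p * sign q) *
         (\<Prod>j<n. ip \<psi> (w j) (p j) (q j)))" .
qed

end

lemma perm_bound: "p permutes {..<n} \<Longrightarrow> j < n \<Longrightarrow> p j < n"
  using permutes_in_image by fastforce

lemma perm_out: "p permutes {..<n} \<Longrightarrow> \<not> j < n \<Longrightarrow> p j = j"
  using permutes_not_in by fastforce

lemma perm_preimage: assumes "p permutes {..<n}" "i < n" obtains k where "k < n" "p k = i"
proof -
  have "i \<in> p ` {..<n}" using permutes_image[OF assms(1)] assms(2) by simp
  then obtain k where "k \<in> {..<n}" "i = p k" by (rule imageE)
  then show thesis using that by simp
qed

lemma perm_agree_one:
  assumes p: "p permutes {..<n}" and q: "q permutes {..<n}" and ne: "q \<noteq> p"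
  shows "\<exists>j<n. j \<noteq> a \<and> q j \<noteq> p j"
proof (rule ccontr)
  assume H: "\<not> (\<exists>j<n. j \<noteq> a \<and> q j \<noteq> p j)"
  have "q = p"
  proof
    fix j show "q j = p j"
    proof (cases "j < n")
      case False then show ?thesis using perm_out[OF p] perm_out[OF q] by simp
    next
      case True
      show ?thesis
      proof (rule ccontr)
        assume qj: "q j \<noteq> p j"
        then have ja: "j = a" using H True by blast
        obtain k where k: "k < n" "p k = q j" using perm_preimage[OF p perm_bound[OF q True]] by blast
        have "k \<noteq> a" using k qj ja by auto
        then have "q k = p k" using H k by blast
        then have "q k = q j" using k by simp
        then have "k = j" using permutes_inj[OF q] by (auto dest: injD)
        then show False using \<open>k \<noteq> a\<close> ja by simp
      qed
    qed
  qed
  with ne show False by simp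
qed

lemma G1:
  fixes c :: "nat \<Rightarrow> nat \<Rightarrow> nat \<Rightarrow> real"
  assumes p: "p permutes {..<n}"
    and hyp: "\<And>j u v. j < n \<Longrightarrow> j \<noteq> a \<Longrightarrow> u < n \<Longrightarrow> v < n \<Longrightarrow> u \<noteq> v \<Longrightarrow> c j u v = 0"
  shows "(\<Sum>q | q permutes {..<n}. of_int (sign p * sign q) * (\<Prod>j<n. c j (p j) (q j))) = (\<Prod>j<n. c j (p j) (p j))"
proof -
  have fin: "finite {q. q permutes {..<n::nat}}" by (simp add: finite_permutations)
  have z: "(\<Prod>j<n. c j (p j) (q j)) = 0" if qp: "q permutes {..<n}" "q \<noteq> p" for q
  proof -
    obtain j where "j < n" "j \<noteq> a" "q j \<noteq> p j" using perm_agree_one[OF p qp] by blast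
    then show ?thesis using hyp[of j "p j" "q j"] perm_bound[OF p, of j] perm_bound[OF qp(1), of j] by (intro prod_zero) auto
  qed
  have "(\<Sum>q | q permutes {..<n}. of_int (sign p * sign q) * (\<Prod>j<n. c j (p j) (q j)))
     = of_int (sign p * sign p) * (\<Prod>j<n. c j (p j) (p j))"
    using p fin by (subst sum.remove[of _ p]) (auto simp: z intro!: sum.neutral)
  then show ?thesis by simp
qed

lemma perm_agree_two:
  assumes p: "p permutes {..<n}" and q: "q permutes {..<n}" and ab: "a < n" "b < n" "a \<noteq> b"
    and H: "\<And>j. j < n \<Longrightarrow> j \<noteq> a \<Longrightarrow> j \<noteq> b \<Longrightarrow> q j = p j"
  shows "q = p \<or> q = p \<circ> Transposition.transpose a b"
proof -
  have qinj: "q x = q y \<Longrightarrow> x = y" for x y using permutes_inj[OF q] by (auto dest: injD)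
  have img: "q x = p a \<or> q x = p b" if x: "x = a \<or> x = b" for x
  proof -
    have xn: "x < n" using x ab by auto
    obtain k where k: "k < n" "p k = q x" using perm_preimage[OF p perm_bound[OF q xn]] by blast
    have "k = a \<or> k = b"
    proof (rule ccontr)
      assume "\<not> (k = a \<or> k = b)"
      then have "q k = p k" using H k by blast
      then have "k = x" using k qinj by simp
      then show False using x \<open>\<not> (k = a \<or> k = b)\<close> by simp
    qed
    then show ?thesis using k by auto
  qed
  have "q a \<noteq> q b" using ab qinj by auto
  then consider "q a = p a" "q b = p b" | "q a = p b" "q b = p a" using img[of a] img[of b] by auto
  then show ?thesis
  proof cases
    case 1
    have "q = p"
    proof
      fix j show "q j = p j"
        using 1 H[of j] perm_out[OF p, of j] perm_out[OF q, of j] by (cases "j < n") auto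
    qed
    then show ?thesis by simp
  next
    case 2
    have "q = p \<circ> Transposition.transpose a b"
    proof
      fix j show "q j = (p \<circ> Transposition.transpose a b) j"
        using 2 H[of j] perm_out[OF p, of j] perm_out[OF q, of j] ab
        by (cases "j = a"; cases "j = b"; cases "j < n") auto
    qed
    then show ?thesis by simp
  qed
qed

lemma G2:
  fixes c :: "nat \<Rightarrow> nat \<Rightarrow> nat \<Rightarrow> real"
  assumes p: "p permutes {..<n}" and ab: "a < n" "b < n" "a \<noteq> b"
    and hyp: "\<And>j u v. j < n \<Longrightarrow> j \<noteq> a \<Longrightarrow> j \<noteq> b \<Longrightarrow> u < n \<Longrightarrow> v < n \<Longrightarrow> u \<noteq> v \<Longrightarrow> c j u v = 0"
  shows "(\<Sum>q | q permutes {..<n}. of_int (sign p * sign q) * (\<Prod>j<n. c j (p j) (q j))) =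
     (\<Prod>j<n. c j (p j) (p j)) - (\<Prod>j<n. c j (p j) (p (Transposition.transpose a b j)))"
proof -
  define r where "r = p \<circ> Transposition.transpose a b"
  have fin: "finite {q. q permutes {..<n::nat}}" by (simp add: finite_permutations)
  have r: "r permutes {..<n}" unfolding r_def using ab by (intro permutes_compose[OF _ p] permutes_swap_id) auto
  have "r a = p b" unfolding r_def by simp
  moreover have "p b \<noteq> p a" using permutes_inj[OF p] ab by (auto dest: injD)
  ultimately have rp: "r \<noteq> p" by auto
  have sr: "sign r = - sign p"
  proof -
    have "permutation p" using p by (auto simp: permutation_permutes)
    moreover have "permutation (Transposition.transpose a b)" by (rule permutation_swap_id)
    ultimately show ?thesis unfolding r_def using ab by (simp add: sign_compose sign_swap_id)
  qed
  define g where "g q = of_int (sign p * sign q) * (\<Prod>j<n. c j (p j) (q j))" for q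
  have z: "g q = 0" if qq: "q \<in> {q. q permutes {..<n}} - {p, r}" for q
  proof -
    have q: "q permutes {..<n}" and qpr: "q \<noteq> p" "q \<noteq> r" using qq by auto
    have "\<exists>j<n. j \<noteq> a \<and> j \<noteq> b \<and> q j \<noteq> p j"
    proof (rule ccontr)
      assume "\<not> (\<exists>j<n. j \<noteq> a \<and> j \<noteq> b \<and> q j \<noteq> p j)"
      then have "q = p \<or> q = r" unfolding r_def using perm_agree_two[OF p q ab] by blast
      then show False using qpr by simp
    qed
    then obtain j where "j < n" "j \<noteq> a" "j \<noteq> b" "q j \<noteq> p j" by blast
    then have "(\<Prod>j<n. c j (p j) (q j)) = 0" using hyp[of j "p j" "q j"] perm_bound[OF p, of j] perm_bound[OF q, of j] by (intro prod_zero) auto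
    then show ?thesis by (simp add: g_def)
  qed
  have "(\<Sum>q | q permutes {..<n}. g q) = (\<Sum>q \<in> {p, r}. g q)"
    using fin p r z by (intro sum.mono_neutral_right) auto
  also have "\<dots> = g p + g r" using rp by simp
  also have "\<dots> = (\<Prod>j<n. c j (p j) (p j)) - (\<Prod>j<n. c j (p j) (p (Transposition.transpose a b j)))"
    unfolding g_def sr by (simp add: r_def)
  finally show ?thesis unfolding g_def .
qed


lemma prod_one_point:
  fixes f :: "nat \<Rightarrow> 'a::comm_monoid_mult"
  assumes "a < n" "\<And>j. j < n \<Longrightarrow> j \<noteq> a \<Longrightarrow> f j = 1"
  shows "(\<Prod>j<n. f j) = f a"
  using assms by (subst prod.remove[of _ a]) (auto intro!: prod.neutral)

lemma prod_two_points:
  fixes f :: "nat \<Rightarrow> 'a::comm_monoid_mult"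
  assumes "a < n" "b < n" "a \<noteq> b" "\<And>j. j < n \<Longrightarrow> j \<noteq> a \<Longrightarrow> j \<noteq> b \<Longrightarrow> f j = 1"
  shows "(\<Prod>j<n. f j) = f a * f b"
proof -
  have "(\<Prod>j<n. f j) = f a * (\<Prod>j\<in>{..<n}-{a}. f j)" using assms by (subst prod.remove[of _ a]) auto
  also have "(\<Prod>j\<in>{..<n}-{a}. f j) = f b * (\<Prod>j\<in>{..<n}-{a}-{b}. f j)" using assms by (subst prod.remove[of _ b]) auto
  also have "(\<Prod>j\<in>{..<n}-{a}-{b}. f j) = 1" using assms by (intro prod.neutral) auto
  finally show ?thesis by simp
qed

lemma sum_perm_apply:
  "p permutes {..<n} \<Longrightarrow> (\<Sum>a<n. h (p a)) = (\<Sum>i<n. h i)"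
  using sum.permute[of p "{..<n}" h] by simp

locale ope_on = ope_setup +
  fixes \<psi> :: "nat \<Rightarrow> real poly" and n :: nat
  assumes on: "\<And>a b. a < n \<Longrightarrow> b < n \<Longrightarrow> (\<integral>t. poly (\<psi> a) t * poly (\<psi> b) t \<partial>\<mu>) = (if a = b then 1 else 0)"
begin

abbreviation "PB \<equiv> PiM {..<n} (\<lambda>_. \<mu>)"

lemma ip_one: "a < n \<Longrightarrow> b < n \<Longrightarrow> ip \<psi> (\<lambda>_. 1) a b = (if a = b then 1 else 0)"
  unfolding ip_def using on by simp

lemma card_perm: "card {p. p permutes {..<n}} = fact n"
  by (simp add: card_permutations)

lemma E0: "integrable PB (\<lambda>x. (Dp \<psi> n x)^2)" "(\<integral>x. (Dp \<psi> n x)^2 \<partial>PB) = fact n"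
proof -
  have m: "\<And>j::nat. (\<lambda>_::real. 1::real) \<in> borel_measurable borel" by simp
  have b: "\<And>j::nat. \<And>t::real. \<bar>(\<lambda>_::real. 1::real) t\<bar> \<le> 1" by simp
  show "integrable PB (\<lambda>x. (Dp \<psi> n x)^2)" using L1(1)[OF m b, where \<psi>=\<psi> and n=n] by simp
  have "(\<integral>x. (Dp \<psi> n x)^2 \<partial>PB) = (\<Sum>p | p permutes {..<n}. \<Sum>q | q permutes {..<n}. of_int (sign p * sign q) *
         (\<Prod>j<n. ip \<psi> (\<lambda>_. 1) (p j) (q j)))" using L1(2)[OF m b, where \<psi>=\<psi> and n=n] by simp
  also have "\<dots> = (\<Sum>p | p permutes {..<n}. \<Prod>j<n. ip \<psi> (\<lambda>_. 1) (p j) (p j))"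
    by (intro sum.cong refl G1[where a=n]) (auto simp: ip_one)
  also have "\<dots> = (\<Sum>p | p permutes {..<n}. 1)"
    by (intro sum.cong refl prod.neutral) (auto simp: ip_one perm_bound)
  finally show "(\<integral>x. (Dp \<psi> n x)^2 \<partial>PB) = fact n" by (simp add: card_perm)
qed

lemma E1:
  assumes a: "a < n" and Wm: "W \<in> borel_measurable borel" and Wb: "\<And>t. \<bar>W t\<bar> \<le> C"
  shows "integrable PB (\<lambda>x. (Dp \<psi> n x)^2 * W (x a))"
    "(\<integral>x. (Dp \<psi> n x)^2 * W (x a) \<partial>PB) = (\<Sum>p | p permutes {..<n}. ip \<psi> W (p a) (p a))"
proof -
  define w where "w j = (if j = a then W else (\<lambda>_. 1))" for j
  have m: "\<And>j. w j \<in> borel_measurable borel" using Wm by (simp add: w_def)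
  have b: "\<And>j t. \<bar>w j t\<bar> \<le> max C 1" using Wb by (auto simp: w_def intro: le_max_iff_disj[THEN iffD2])
  have pr: "(\<Prod>j<n. w j (x j)) = W (x a)" for x
    using a by (subst prod_one_point[of a]) (auto simp: w_def)
  show "integrable PB (\<lambda>x. (Dp \<psi> n x)^2 * W (x a))" using L1(1)[where w=w and C="max C 1" and \<psi>=\<psi> and n=n, OF m b] by (simp add: pr)
  have "(\<integral>x. (Dp \<psi> n x)^2 * W (x a) \<partial>PB) = (\<Sum>p | p permutes {..<n}. \<Sum>q | q permutes {..<n}. of_int (sign p * sign q) *
         (\<Prod>j<n. ip \<psi> (w j) (p j) (q j)))" using L1(2)[where w=w and C="max C 1" and \<psi>=\<psi> and n=n, OF m b] by (simp add: pr)
  also have "\<dots> = (\<Sum>p | p permutes {..<n}. \<Prod>j<n. ip \<psi> (w j) (p j) (p j))"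
    by (intro sum.cong refl G1[where a=a]) (auto simp: ip_one w_def)
  also have "\<dots> = (\<Sum>p | p permutes {..<n}. ip \<psi> W (p a) (p a))"
    using a by (intro sum.cong refl, subst prod_one_point[of a]) (auto simp: ip_one perm_bound w_def)
  finally show "(\<integral>x. (Dp \<psi> n x)^2 * W (x a) \<partial>PB) = (\<Sum>p | p permutes {..<n}. ip \<psi> W (p a) (p a))" .
qed

lemma E2:
  assumes ab: "a < n" "b < n" "a \<noteq> b" and Um: "U \<in> borel_measurable borel" and Ub: "\<And>t. \<bar>U t\<bar> \<le> C"
    and Vm: "V \<in> borel_measurable borel" and Vb: "\<And>t. \<bar>V t\<bar> \<le> C"
  shows "integrable PB (\<lambda>x. (Dp \<psi> n x)^2 * (U (x a) * V (x b)))"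
    "(\<integral>x. (Dp \<psi> n x)^2 * (U (x a) * V (x b)) \<partial>PB) =
      (\<Sum>p | p permutes {..<n}. ip \<psi> U (p a) (p a) * ip \<psi> V (p b) (p b) - ip \<psi> U (p a) (p b) * ip \<psi> V (p b) (p a))"
proof -
  define w where "w j = (if j = a then U else if j = b then V else (\<lambda>_. 1))" for j
  have m: "\<And>j. w j \<in> borel_measurable borel" using Um Vm by (simp add: w_def)
  have b: "\<And>j t. \<bar>w j t\<bar> \<le> max C 1" using Ub Vb by (auto simp: w_def intro: le_max_iff_disj[THEN iffD2])
  have pr: "(\<Prod>j<n. w j (x j)) = U (x a) * V (x b)" for x
    using ab by (subst prod_two_points[of a n b]) (auto simp: w_def)
  show "integrable PB (\<lambda>x. (Dp \<psi> n x)^2 * (U (x a) * V (x b)))" using L1(1)[where w=w and C="max C 1" and \<psi>=\<psi> and n=n, OF m b] by (simp add: pr)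
  have "(\<integral>x. (Dp \<psi> n x)^2 * (U (x a) * V (x b)) \<partial>PB) = (\<Sum>p | p permutes {..<n}. \<Sum>q | q permutes {..<n}. of_int (sign p * sign q) *
         (\<Prod>j<n. ip \<psi> (w j) (p j) (q j)))" using L1(2)[where w=w and C="max C 1" and \<psi>=\<psi> and n=n, OF m b] by (simp add: pr)
  also have "\<dots> = (\<Sum>p | p permutes {..<n}. (\<Prod>j<n. ip \<psi> (w j) (p j) (p j)) - (\<Prod>j<n. ip \<psi> (w j) (p j) (p (Transposition.transpose a b j))))"
    using ab by (intro sum.cong refl G2) (auto simp: ip_one w_def)
  also have "\<dots> = (\<Sum>p | p permutes {..<n}. ip \<psi> U (p a) (p a) * ip \<psi> V (p b) (p b) - ip \<psi> U (p a) (p b) * ip \<psi> V (p b) (p a))"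
  proof (intro sum.cong refl)
    fix p assume p: "p \<in> {p. p permutes {..<n}}"
    have "(\<Prod>j<n. ip \<psi> (w j) (p j) (p j)) = ip \<psi> U (p a) (p a) * ip \<psi> V (p b) (p b)"
      using ab p by (subst prod_two_points[of a n b]) (auto simp: ip_one perm_bound w_def)
    moreover have "(\<Prod>j<n. ip \<psi> (w j) (p j) (p (Transposition.transpose a b j))) = ip \<psi> U (p a) (p b) * ip \<psi> V (p b) (p a)"
      using ab p by (subst prod_two_points[of a n b]) (auto simp: ip_one perm_bound w_def)
    ultimately show "(\<Prod>j<n. ip \<psi> (w j) (p j) (p j)) - (\<Prod>j<n. ip \<psi> (w j) (p j) (p (Transposition.transpose a b j)))
       = ip \<psi> U (p a) (p a) * ip \<psi> V (p b) (p b) - ip \<psi> U (p a) (p b) * ip \<psi> V (p b) (p a)" by simp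
  qed
  finally show "(\<integral>x. (Dp \<psi> n x)^2 * (U (x a) * V (x b)) \<partial>PB) =
      (\<Sum>p | p permutes {..<n}. ip \<psi> U (p a) (p a) * ip \<psi> V (p b) (p b) - ip \<psi> U (p a) (p b) * ip \<psi> V (p b) (p a))" .
qed

lemma ip_sym: "ip \<psi> w i k = ip \<psi> w k i"
  unfolding ip_def by (simp add: mult_ac)

lemma fin_perm: "finite {p. p permutes {..<n::nat}}" by (simp add: finite_permutations)

lemma sum_perm_const: "(\<Sum>p | p permutes {..<n}. c) = fact n * c"
  by (simp add: card_perm)

lemma V1:
  assumes um: "u \<in> borel_measurable borel" and ub: "\<And>t. \<bar>u t\<bar> \<le> C"
  shows "integrable PB (\<lambda>x. (Dp \<psi> n x)^2 * (\<Sum>a<n. u (x a)))"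
    "(\<integral>x. (Dp \<psi> n x)^2 * (\<Sum>a<n. u (x a)) \<partial>PB) = fact n * (\<Sum>i<n. ip \<psi> u i i)"
proof -
  have eq: "(Dp \<psi> n x)^2 * (\<Sum>a<n. u (x a)) = (\<Sum>a<n. (Dp \<psi> n x)^2 * u (x a))" for x
    by (simp add: sum_distrib_left)
  show "integrable PB (\<lambda>x. (Dp \<psi> n x)^2 * (\<Sum>a<n. u (x a)))"
    unfolding eq by (intro Bochner_Integration.integrable_sum E1(1)[OF _ um ub]) auto
  have "(\<integral>x. (Dp \<psi> n x)^2 * (\<Sum>a<n. u (x a)) \<partial>PB) = (\<Sum>a<n. \<integral>x. (Dp \<psi> n x)^2 * u (x a) \<partial>PB)"
    unfolding eq by (intro Bochner_Integration.integral_sum E1(1)[OF _ um ub]) auto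
  also have "\<dots> = (\<Sum>a<n. \<Sum>p | p permutes {..<n}. ip \<psi> u (p a) (p a))"
    by (intro sum.cong refl E1(2)[OF _ um ub]) auto
  also have "\<dots> = (\<Sum>p | p permutes {..<n}. \<Sum>a<n. ip \<psi> u (p a) (p a))" by (rule sum.swap)
  also have "\<dots> = (\<Sum>p | p permutes {..<n}. \<Sum>i<n. ip \<psi> u i i)"
  proof (rule sum.cong[OF refl])
    fix p assume "p \<in> {p. p permutes {..<n}}"
    then show "(\<Sum>a<n. ip \<psi> u (p a) (p a)) = (\<Sum>i<n. ip \<psi> u i i)"
      using sum_perm_apply[of p n "\<lambda>i. ip \<psi> u i i"] by simp
  qed
  finally show "(\<integral>x. (Dp \<psi> n x)^2 * (\<Sum>a<n. u (x a)) \<partial>PB) = fact n * (\<Sum>i<n. ip \<psi> u i i)"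
    by (simp add: card_perm)
qed

lemma V2:
  assumes um: "u \<in> borel_measurable borel" and ub: "\<And>t. \<bar>u t\<bar> \<le> C"
  shows "integrable PB (\<lambda>x. (Dp \<psi> n x)^2 * (\<Sum>a<n. u (x a))^2)"
    "(\<integral>x. (Dp \<psi> n x)^2 * (\<Sum>a<n. u (x a))^2 \<partial>PB) = fact n * ((\<Sum>i<n. ip \<psi> (\<lambda>t. u t * u t) i i)
        + (\<Sum>i<n. \<Sum>k<n. ip \<psi> u i i * ip \<psi> u k k - ip \<psi> u i k * ip \<psi> u i k))"
proof -
  define G where "G i k = ip \<psi> u i i * ip \<psi> u k k - ip \<psi> u i k * ip \<psi> u i k" for i k
  have uum: "(\<lambda>t. u t * u t) \<in> borel_measurable borel" using um by simp
  have uub: "\<bar>u t * u t\<bar> \<le> C * C" for t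
  proof -
    have "\<bar>u t\<bar> * \<bar>u t\<bar> \<le> C * C" using ub[of t] by (intro mult_mono) auto
    then show ?thesis by (simp add: abs_mult)
  qed
  have eq: "(Dp \<psi> n x)^2 * (\<Sum>a<n. u (x a))^2 = (\<Sum>a<n. \<Sum>b<n. (Dp \<psi> n x)^2 * (u (x a) * u (x b)))" for x
  proof -
    have "(\<Sum>a<n. u (x a))^2 = (\<Sum>a<n. \<Sum>b<n. u (x a) * u (x b))" by (simp only: power2_eq_square sum_product)
    then show ?thesis by (simp add: sum_distrib_left)
  qed
  have intab: "integrable PB (\<lambda>x. (Dp \<psi> n x)^2 * (u (x a) * u (x b)))" if "a < n" "b < n" for a b
  proof (cases "a = b")
    case True then show ?thesis using E1(1)[OF that(1) uum uub] by simp
  next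
    case False then show ?thesis using E2(1)[OF that False um ub um ub] by simp
  qed
  have valab: "(\<integral>x. (Dp \<psi> n x)^2 * (u (x a) * u (x b)) \<partial>PB) =
     (\<Sum>p | p permutes {..<n}. (if a = b then ip \<psi> (\<lambda>t. u t * u t) (p a) (p a) else 0) + G (p a) (p b))"
    if "a < n" "b < n" for a b
  proof (cases "a = b")
    case True then show ?thesis using E1(2)[OF that(1) uum uub] by (simp add: G_def)
  next
    case False then show ?thesis using E2(2)[OF that False um ub um ub] by (simp add: G_def ip_sym[of u "p b" "p a" for p])
  qed
  show "integrable PB (\<lambda>x. (Dp \<psi> n x)^2 * (\<Sum>a<n. u (x a))^2)"
    unfolding eq by (intro Bochner_Integration.integrable_sum intab) auto
  have "(\<integral>x. (Dp \<psi> n x)^2 * (\<Sum>a<n. u (x a))^2 \<partial>PB) = (\<Sum>a<n. \<Sum>b<n. \<integral>x. (Dp \<psi> n x)^2 * (u (x a) * u (x b)) \<partial>PB)"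
  proof -
    have inner: "(\<integral>x. (\<Sum>b<n. (Dp \<psi> n x)^2 * (u (x a) * u (x b))) \<partial>PB) = (\<Sum>b<n. \<integral>x. (Dp \<psi> n x)^2 * (u (x a) * u (x b)) \<partial>PB)"
      if "a < n" for a by (rule Bochner_Integration.integral_sum) (use intab that in auto)
    have "(\<integral>x. (\<Sum>a<n. \<Sum>b<n. (Dp \<psi> n x)^2 * (u (x a) * u (x b))) \<partial>PB) = (\<Sum>a<n. \<integral>x. (\<Sum>b<n. (Dp \<psi> n x)^2 * (u (x a) * u (x b))) \<partial>PB)"
      by (rule Bochner_Integration.integral_sum) (use intab in \<open>auto intro!: Bochner_Integration.integrable_sum\<close>)
    also have "\<dots> = (\<Sum>a<n. \<Sum>b<n. \<integral>x. (Dp \<psi> n x)^2 * (u (x a) * u (x b)) \<partial>PB)"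
      by (intro sum.cong refl inner) auto
    finally show ?thesis unfolding eq .
  qed
  also have "\<dots> = (\<Sum>a<n. \<Sum>b<n. \<Sum>p | p permutes {..<n}. (if a = b then ip \<psi> (\<lambda>t. u t * u t) (p a) (p a) else 0) + G (p a) (p b))"
    by (intro sum.cong refl valab) auto
  also have "\<dots> = (\<Sum>p | p permutes {..<n}. \<Sum>a<n. \<Sum>b<n. (if a = b then ip \<psi> (\<lambda>t. u t * u t) (p a) (p a) else 0) + G (p a) (p b))"
    by (simp add: sum.swap[of _ "{p. p permutes {..<n}}"])
  also have "\<dots> = (\<Sum>p | p permutes {..<n}. (\<Sum>i<n. ip \<psi> (\<lambda>t. u t * u t) i i) + (\<Sum>i<n. \<Sum>k<n. G i k))"
  proof (rule sum.cong[OF refl])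
    fix p assume p: "p \<in> {p. p permutes {..<n}}"
    have "(\<Sum>a<n. \<Sum>b<n. (if a = b then ip \<psi> (\<lambda>t. u t * u t) (p a) (p a) else 0) + G (p a) (p b))
       = (\<Sum>a<n. ip \<psi> (\<lambda>t. u t * u t) (p a) (p a)) + (\<Sum>a<n. \<Sum>b<n. G (p a) (p b))"
      by (simp add: sum.distrib)
    also have "\<dots> = (\<Sum>i<n. ip \<psi> (\<lambda>t. u t * u t) i i) + (\<Sum>i<n. \<Sum>k<n. G i k)"
    proof -
      have pp: "p permutes {..<n}" using p by simp
      have "(\<Sum>a<n. \<Sum>b<n. G (p a) (p b)) = (\<Sum>a<n. \<Sum>k<n. G (p a) k)"
        using sum_perm_apply[OF pp, of "\<lambda>k. G (p _) k"] by simp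
      also have "\<dots> = (\<Sum>i<n. \<Sum>k<n. G i k)" using sum_perm_apply[OF pp, of "\<lambda>i. \<Sum>k<n. G i k"] by simp
      finally show ?thesis using sum_perm_apply[OF pp, of "\<lambda>i. ip \<psi> (\<lambda>t. u t * u t) i i"] by simp
    qed
    finally show "(\<Sum>a<n. \<Sum>b<n. (if a = b then ip \<psi> (\<lambda>t. u t * u t) (p a) (p a) else 0) + G (p a) (p b))
       = (\<Sum>i<n. ip \<psi> (\<lambda>t. u t * u t) i i) + (\<Sum>i<n. \<Sum>k<n. G i k)" .
  qed
  finally show "(\<integral>x. (Dp \<psi> n x)^2 * (\<Sum>a<n. u (x a))^2 \<partial>PB) = fact n * ((\<Sum>i<n. ip \<psi> (\<lambda>t. u t * u t) i i)
        + (\<Sum>i<n. \<Sum>k<n. ip \<psi> u i i * ip \<psi> u k k - ip \<psi> u i k * ip \<psi> u i k))"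
    by (simp add: card_perm G_def)
qed

definition Qf :: "(real \<Rightarrow> real) \<Rightarrow> real" where
  "Qf u = (\<Sum>i<n. ip \<psi> (\<lambda>t. u t * u t) i i) - (\<Sum>i<n. \<Sum>k<n. (ip \<psi> u i k)^2)"

lemma Var_formula:
  assumes um: "u \<in> borel_measurable borel" and ub: "\<And>t. \<bar>u t\<bar> \<le> C"
  shows "(\<integral>x. ((Dp \<psi> n x)^2 / fact n) * ((\<Sum>a<n. u (x a)) -
            (\<integral>y. ((Dp \<psi> n y)^2 / fact n) * (\<Sum>a<n. u (y a)) \<partial>PB))^2 \<partial>PB) = Qf u"
proof -
  define m where "m = (\<Sum>i<n. ip \<psi> u i i)"
  have fn: "fact n \<noteq> (0::real)" by simp
  have i0: "integrable PB (\<lambda>x. (Dp \<psi> n x)^2)" by (rule E0(1))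
  note i1 = V1(1)[OF um ub] and i2 = V2(1)[OF um ub]
  have mm: "(\<integral>y. ((Dp \<psi> n y)^2 / fact n) * (\<Sum>a<n. u (y a)) \<partial>PB) = m"
    using V1(2)[OF um ub] fn by (simp add: m_def)
  have eq: "((Dp \<psi> n x)^2 / fact n) * ((\<Sum>a<n. u (x a)) - m)^2 =
     (1 / fact n) * ((Dp \<psi> n x)^2 * (\<Sum>a<n. u (x a))^2) - (2 * m / fact n) * ((Dp \<psi> n x)^2 * (\<Sum>a<n. u (x a)))
       + (m^2 / fact n) * (Dp \<psi> n x)^2" for x
    by (simp add: power2_eq_square field_simps)
  have "(\<integral>x. ((Dp \<psi> n x)^2 / fact n) * ((\<Sum>a<n. u (x a)) - m)^2 \<partial>PB) =
     (1 / fact n) * (\<integral>x. (Dp \<psi> n x)^2 * (\<Sum>a<n. u (x a))^2 \<partial>PB) - (2 * m / fact n) * (\<integral>x. (Dp \<psi> n x)^2 * (\<Sum>a<n. u (x a)) \<partial>PB)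
       + (m^2 / fact n) * (\<integral>x. (Dp \<psi> n x)^2 \<partial>PB)"
    unfolding eq using i0 i1 i2 by simp
  also have "\<dots> = (\<Sum>i<n. ip \<psi> (\<lambda>t. u t * u t) i i)
        + (\<Sum>i<n. \<Sum>k<n. ip \<psi> u i i * ip \<psi> u k k - ip \<psi> u i k * ip \<psi> u i k) - 2 * m * m + m^2"
    using fn unfolding V2(2)[OF um ub] V1(2)[OF um ub] E0(2) m_def by simp
  also have "(\<Sum>i<n. \<Sum>k<n. ip \<psi> u i i * ip \<psi> u k k - ip \<psi> u i k * ip \<psi> u i k) = m * m - (\<Sum>i<n. \<Sum>k<n. (ip \<psi> u i k)^2)"
    unfolding m_def by (simp add: sum_subtractf sum_product power2_eq_square)
  finally show ?thesis unfolding mm Qf_def by (simp add: power2_eq_square)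
qed

end

context ope_on
begin

definition Kf :: "real \<Rightarrow> real \<Rightarrow> real" where
  "Kf s t = (\<Sum>i<n. poly (\<psi> i) s * poly (\<psi> i) t)"

lemma ip_lin:
  assumes um: "u \<in> borel_measurable borel" and ub: "\<And>t. \<bar>u t\<bar> \<le> C"
    and vm: "v \<in> borel_measurable borel" and vb: "\<And>t. \<bar>v t\<bar> \<le> D"
  shows "ip \<psi> (\<lambda>t. a + b * u t + c * v t) i k = a * ip \<psi> (\<lambda>_. 1) i k + b * ip \<psi> u i k + c * ip \<psi> v i k"
proof -
  have o: "(\<lambda>_::real. 1::real) \<in> borel_measurable borel" "\<And>t::real. \<bar>(\<lambda>_::real. 1::real) t\<bar> \<le> 1" by auto
  note iu = int_ppw[OF um ub, of "\<psi> i" "\<psi> k"] and iv = int_ppw[OF vm vb, of "\<psi> i" "\<psi> k"]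
    and i1 = int_ppw[OF o, of "\<psi> i" "\<psi> k"]
  have "ip \<psi> (\<lambda>t. a + b * u t + c * v t) i k =
     (\<integral>t. a * (poly (\<psi> i) t * poly (\<psi> k) t * 1) + b * (poly (\<psi> i) t * poly (\<psi> k) t * u t)
         + c * (poly (\<psi> i) t * poly (\<psi> k) t * v t) \<partial>\<mu>)"
    unfolding ip_def by (intro Bochner_Integration.integral_cong refl) (simp add: algebra_simps)
  also have "\<dots> = a * ip \<psi> (\<lambda>_. 1) i k + b * ip \<psi> u i k + c * ip \<psi> v i k"
    unfolding ip_def using iu iv i1 by simp
  finally show ?thesis .
qed

lemma K2: "(Kf s t)^2 = (\<Sum>i<n. \<Sum>k<n. (poly (\<psi> i) s * poly (\<psi> k) s) * (poly (\<psi> i) t * poly (\<psi> k) t))"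
  unfolding Kf_def power2_eq_square sum_product by (intro sum.cong refl) (simp add: mult_ac)

lemma int_ppsum:
  fixes W :: "nat \<Rightarrow> nat \<Rightarrow> real \<Rightarrow> real"
  assumes Wm: "\<And>i k. W i k \<in> borel_measurable borel" and Wb: "\<And>i k t. \<bar>W i k t\<bar> \<le> Cb i k"
  shows "integrable \<mu> (\<lambda>t. \<Sum>i<n. \<Sum>k<n. c i k * (poly (\<psi> i) t * poly (\<psi> k) t * W i k t))"
    "(\<integral>t. (\<Sum>i<n. \<Sum>k<n. c i k * (poly (\<psi> i) t * poly (\<psi> k) t * W i k t)) \<partial>\<mu>) = (\<Sum>i<n. \<Sum>k<n. c i k * ip \<psi> (W i k) i k)"
proof -
  have ii: "integrable \<mu> (\<lambda>t. poly (\<psi> i) t * poly (\<psi> k) t * W i k t)" for i k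
    by (rule int_ppw[OF Wm Wb])
  show "integrable \<mu> (\<lambda>t. \<Sum>i<n. \<Sum>k<n. c i k * (poly (\<psi> i) t * poly (\<psi> k) t * W i k t))"
    using ii by (intro Bochner_Integration.integrable_sum integrable_mult_right) auto
  have "(\<integral>t. (\<Sum>i<n. \<Sum>k<n. c i k * (poly (\<psi> i) t * poly (\<psi> k) t * W i k t)) \<partial>\<mu>)
     = (\<Sum>i<n. \<integral>t. (\<Sum>k<n. c i k * (poly (\<psi> i) t * poly (\<psi> k) t * W i k t)) \<partial>\<mu>)"
    using ii by (intro Bochner_Integration.integral_sum Bochner_Integration.integrable_sum integrable_mult_right) auto
  also have "\<dots> = (\<Sum>i<n. \<Sum>k<n. c i k * ip \<psi> (W i k) i k)"
    unfolding ip_def using ii by (intro sum.cong refl) (simp add: Bochner_Integration.integral_sum)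
  finally show "(\<integral>t. (\<Sum>i<n. \<Sum>k<n. c i k * (poly (\<psi> i) t * poly (\<psi> k) t * W i k t)) \<partial>\<mu>) = (\<Sum>i<n. \<Sum>k<n. c i k * ip \<psi> (W i k) i k)" .
qed

definition inner :: "(real \<Rightarrow> real) \<Rightarrow> real \<Rightarrow> real" where
  "inner u s = (\<integral>t. (u s - u t)^2 * (Kf s t)^2 \<partial>\<mu>)"

lemma inner_props:
  assumes um: "u \<in> borel_measurable borel" and ub: "\<And>t. \<bar>u t\<bar> \<le> C"
  shows "integrable \<mu> (\<lambda>t. (u s - u t)^2 * (Kf s t)^2)"
    "inner u s = (\<Sum>i<n. \<Sum>k<n. (poly (\<psi> i) s * poly (\<psi> k) s) *
        (ip \<psi> (\<lambda>t. u t * u t) i k + (-2 * ip \<psi> u i k) * u s + (if i = k then 1 else 0) * (u s * u s)))"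
proof -
  have uum: "(\<lambda>t. u t * u t) \<in> borel_measurable borel" using um by simp
  have uub: "\<bar>u t * u t\<bar> \<le> C * C" for t
  proof -
    have "\<bar>u t\<bar> * \<bar>u t\<bar> \<le> C * C" using ub[of t] by (intro mult_mono) auto
    then show ?thesis by (simp add: abs_mult)
  qed
  define W where "W = (\<lambda>t. (u s)^2 + (-2 * u s) * u t + 1 * (u t * u t))"
  have Wm: "W \<in> borel_measurable borel" unfolding W_def using um by simp
  have Wb: "\<bar>W t\<bar> \<le> (u s)^2 + 2 * \<bar>u s\<bar> * C + C * C" for t
  proof -
    have "\<bar>W t\<bar> \<le> \<bar>(u s)^2\<bar> + \<bar>(-2 * u s) * u t\<bar> + \<bar>u t * u t\<bar>" unfolding W_def by linarith
    also have "\<dots> \<le> (u s)^2 + 2 * \<bar>u s\<bar> * C + C * C"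
      using uub[of t] ub[of t] by (auto simp: abs_mult intro!: add_mono mult_left_mono)
    finally show ?thesis .
  qed
  have eq: "(u s - u t)^2 * (Kf s t)^2 = (\<Sum>i<n. \<Sum>k<n. (poly (\<psi> i) s * poly (\<psi> k) s) * (poly (\<psi> i) t * poly (\<psi> k) t * (\<lambda>i k. W) i k t))" for t
    unfolding K2 W_def by (simp add: sum_distrib_left power2_eq_square algebra_simps)
  show "integrable \<mu> (\<lambda>t. (u s - u t)^2 * (Kf s t)^2)"
    unfolding eq by (rule int_ppsum(1)[where W="\<lambda>i k. W"]) (use Wm Wb in auto)
  have "inner u s = (\<Sum>i<n. \<Sum>k<n. (poly (\<psi> i) s * poly (\<psi> k) s) * ip \<psi> W i k)"
    unfolding inner_def eq by (rule int_ppsum(2)[where W="\<lambda>i k. W"]) (use Wm Wb in auto)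
  also have "\<dots> = (\<Sum>i<n. \<Sum>k<n. (poly (\<psi> i) s * poly (\<psi> k) s) *
        (ip \<psi> (\<lambda>t. u t * u t) i k + (-2 * ip \<psi> u i k) * u s + (if i = k then 1 else 0) * (u s * u s)))"
  proof (intro sum.cong refl)
    fix i k assume ik: "i \<in> {..<n}" "k \<in> {..<n}"
    have "ip \<psi> W i k = (u s)^2 * ip \<psi> (\<lambda>_. 1) i k + (-2 * u s) * ip \<psi> u i k + 1 * ip \<psi> (\<lambda>t. u t * u t) i k"
      unfolding W_def by (rule ip_lin[OF um ub uum uub])
    then have ipW: "ip \<psi> W i k = ip \<psi> (\<lambda>t. u t * u t) i k + (-2 * ip \<psi> u i k) * u s + (if i = k then 1 else 0) * (u s * u s)"
      using ik ip_one[of i k] by (cases "i = k") (simp_all add: power2_eq_square algebra_simps)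
    show "(poly (\<psi> i) s * poly (\<psi> k) s) * ip \<psi> W i k = (poly (\<psi> i) s * poly (\<psi> k) s) *
        (ip \<psi> (\<lambda>t. u t * u t) i k + (-2 * ip \<psi> u i k) * u s + (if i = k then 1 else 0) * (u s * u s))"
      by (simp only: ipW)
  qed
  finally show "inner u s = (\<Sum>i<n. \<Sum>k<n. (poly (\<psi> i) s * poly (\<psi> k) s) *
        (ip \<psi> (\<lambda>t. u t * u t) i k + (-2 * ip \<psi> u i k) * u s + (if i = k then 1 else 0) * (u s * u s)))" .
qed

lemma DF:
  assumes um: "u \<in> borel_measurable borel" and ub: "\<And>t. \<bar>u t\<bar> \<le> C"
  shows "integrable \<mu> (inner u)" "(\<integral>s. inner u s \<partial>\<mu>) = 2 * Qf u"
proof -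
  have uum: "(\<lambda>t. u t * u t) \<in> borel_measurable borel" using um by simp
  have uub: "\<bar>u t * u t\<bar> \<le> C * C" for t
  proof -
    have "\<bar>u t\<bar> * \<bar>u t\<bar> \<le> C * C" using ub[of t] by (intro mult_mono) auto
    then show ?thesis by (simp add: abs_mult)
  qed
  define W where "W i k = (\<lambda>s. ip \<psi> (\<lambda>t. u t * u t) i k + (-2 * ip \<psi> u i k) * u s + (if i = k then 1 else 0) * (u s * u s))" for i k
  have Wm: "W i k \<in> borel_measurable borel" for i k unfolding W_def using um by simp
  have Wb: "\<bar>W i k s\<bar> \<le> \<bar>ip \<psi> (\<lambda>t. u t * u t) i k\<bar> + \<bar>-2 * ip \<psi> u i k\<bar> * C + C * C" for i k s
  proof -
    have "\<bar>W i k s\<bar> \<le> \<bar>ip \<psi> (\<lambda>t. u t * u t) i k\<bar> + \<bar>(-2 * ip \<psi> u i k) * u s\<bar> + \<bar>(if i = k then 1 else 0) * (u s * u s)\<bar>"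
      unfolding W_def by linarith
    also have "\<dots> \<le> \<bar>ip \<psi> (\<lambda>t. u t * u t) i k\<bar> + \<bar>-2 * ip \<psi> u i k\<bar> * C + C * C"
    proof -
      have "\<bar>(-2 * ip \<psi> u i k) * u s\<bar> \<le> \<bar>-2 * ip \<psi> u i k\<bar> * C"
        unfolding abs_mult by (rule mult_left_mono[OF ub]) simp
      moreover have "\<bar>(if i = k then 1 else 0) * (u s * u s)\<bar> \<le> C * C"
        using uub[of s] by simp
      ultimately show ?thesis by linarith
    qed
    finally show ?thesis .
  qed
  have eq: "inner u s = (\<Sum>i<n. \<Sum>k<n. 1 * (poly (\<psi> i) s * poly (\<psi> k) s * W i k s))" for s
    unfolding inner_props(2)[OF um ub] W_def by (simp add: mult_ac)
  show "integrable \<mu> (inner u)"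
    unfolding eq by (rule int_ppsum(1)) (use Wm Wb in auto)
  have "(\<integral>s. inner u s \<partial>\<mu>) = (\<Sum>i<n. \<Sum>k<n. 1 * ip \<psi> (W i k) i k)"
    unfolding eq by (rule int_ppsum(2)) (use Wm Wb in auto)
  also have "\<dots> = (\<Sum>i<n. \<Sum>k<n. (if i = k then 2 * ip \<psi> (\<lambda>t. u t * u t) i k else 0) - 2 * (ip \<psi> u i k)^2)"
  proof (intro sum.cong refl)
    fix i k assume ik: "i \<in> {..<n}" "k \<in> {..<n}"
    have "ip \<psi> (W i k) i k = ip \<psi> (\<lambda>t. u t * u t) i k * ip \<psi> (\<lambda>_. 1) i k + (-2 * ip \<psi> u i k) * ip \<psi> u i k
        + (if i = k then 1 else 0) * ip \<psi> (\<lambda>t. u t * u t) i k"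
      unfolding W_def by (rule ip_lin[OF um ub uum uub])
    then show "1 * ip \<psi> (W i k) i k = (if i = k then 2 * ip \<psi> (\<lambda>t. u t * u t) i k else 0) - 2 * (ip \<psi> u i k)^2"
      using ik ip_one[of i k] by (cases "i = k") (simp_all add: power2_eq_square algebra_simps)
  qed
  also have "\<dots> = 2 * Qf u"
    unfolding Qf_def by (simp add: sum_subtractf sum_distrib_left right_diff_distrib)
  finally show "(\<integral>s. inner u s \<partial>\<mu>) = 2 * Qf u" .
qed

lemma Qf_mono:
  assumes um: "u \<in> borel_measurable borel" and ub: "\<And>t. \<bar>u t\<bar> \<le> C1"
    and vm: "v \<in> borel_measurable borel" and vb: "\<And>t. \<bar>v t\<bar> \<le> C2"
    and wm: "w \<in> borel_measurable borel" and wb: "\<And>t. \<bar>w t\<bar> \<le> C3"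
    and c: "c \<ge> 0"
    and H: "\<And>s t. (u s - u t)^2 \<le> c * ((v s - v t)^2 + (w s - w t)^2)"
  shows "Qf u \<le> c * (Qf v + Qf w)"
proof -
  have pt: "inner u s \<le> c * (inner v s + inner w s)" for s
  proof -
    have "inner u s \<le> (\<integral>t. c * ((v s - v t)^2 * (Kf s t)^2) + c * ((w s - w t)^2 * (Kf s t)^2) \<partial>\<mu>)"
      unfolding inner_def
    proof (rule integral_mono)
      show "integrable \<mu> (\<lambda>t. (u s - u t)^2 * (Kf s t)^2)" by (rule inner_props(1)[OF um ub])
      show "integrable \<mu> (\<lambda>t. c * ((v s - v t)^2 * (Kf s t)^2) + c * ((w s - w t)^2 * (Kf s t)^2))"
        using inner_props(1)[OF vm vb] inner_props(1)[OF wm wb] by simp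
      fix t
      have "(u s - u t)^2 * (Kf s t)^2 \<le> (c * ((v s - v t)^2 + (w s - w t)^2)) * (Kf s t)^2"
        by (rule mult_right_mono[OF H]) simp
      then show "(u s - u t)^2 * (Kf s t)^2 \<le> c * ((v s - v t)^2 * (Kf s t)^2) + c * ((w s - w t)^2 * (Kf s t)^2)"
        by (simp add: algebra_simps)
    qed
    also have "\<dots> = c * (inner v s + inner w s)"
      unfolding inner_def using inner_props(1)[OF vm vb] inner_props(1)[OF wm wb] by (simp add: algebra_simps)
    finally show ?thesis .
  qed
  have "2 * Qf u = (\<integral>s. inner u s \<partial>\<mu>)" using DF(2)[OF um ub] by simp
  also have "\<dots> \<le> (\<integral>s. c * (inner v s + inner w s) \<partial>\<mu>)"
    by (rule integral_mono) (use DF(1)[OF um ub] DF(1)[OF vm vb] DF(1)[OF wm wb] pt in auto)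
  also have "\<dots> = c * (2 * Qf v + 2 * Qf w)"
    using DF[OF vm vb] DF[OF wm wb] by simp
  finally show ?thesis by (simp add: algebra_simps)
qed

end

context ope_on
begin

lemma Dp_meas[measurable]: "Dp \<psi> n \<in> borel_measurable PB"
  unfolding Dp_def[abs_def] by measurable

lemma S_meas[measurable]:
  fixes u :: "real \<Rightarrow> real"
  assumes "u \<in> borel_measurable borel"
  shows "(\<lambda>x. \<Sum>a<n. u (x a)) \<in> borel_measurable PB"
proof -
  have um: "u \<in> borel_measurable \<mu>" using assms by (simp only: meas_mu)
  have "(\<lambda>x. u (x a)) \<in> borel_measurable PB" if "a \<in> {..<n}" for a
    by (rule measurable_compose[OF measurable_component_singleton[OF that] um])
  then show ?thesis by (auto intro!: borel_measurable_sum)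
qed

lemma Var_int:
  assumes um: "u \<in> borel_measurable borel" and ub: "\<And>t. \<bar>u t\<bar> \<le> C"
  shows "integrable PB (\<lambda>x. ((Dp \<psi> n x)^2 / fact n) * ((\<Sum>a<n. u (x a)) - m)^2)"
proof -
  have eq: "((Dp \<psi> n x)^2 / fact n) * ((\<Sum>a<n. u (x a)) - m)^2 =
     (1 / fact n) * ((Dp \<psi> n x)^2 * (\<Sum>a<n. u (x a))^2) - (2 * m / fact n) * ((Dp \<psi> n x)^2 * (\<Sum>a<n. u (x a)))
       + (m^2 / fact n) * (Dp \<psi> n x)^2" for x
    by (simp add: power2_eq_square field_simps)
  show ?thesis unfolding eq using E0(1) V1(1)[OF um ub] V2(1)[OF um ub] by simp
qed

lemma cvar_formula:
  fixes H :: "real \<Rightarrow> complex"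
  assumes Hm: "H \<in> borel_measurable borel" and Hb: "\<And>t. cmod (H t) \<le> C"
  shows "cvariance (density PB (\<lambda>x. ennreal ((Dp \<psi> n x)^2 / fact n))) (\<lambda>x. \<Sum>j<n. H (x j))
     = Qf (\<lambda>t. Re (H t)) + Qf (\<lambda>t. Im (H t))"
proof -
  define ur where "ur t = Re (H t)" for t
  define ui where "ui t = Im (H t)" for t
  have urm: "ur \<in> borel_measurable borel" unfolding ur_def[abs_def] using Hm by measurable
  have uim: "ui \<in> borel_measurable borel" unfolding ui_def[abs_def] using Hm by measurable
  have urb: "\<bar>ur t\<bar> \<le> C" for t unfolding ur_def using abs_Re_le_cmod[of "H t"] Hb[of t] by linarith
  have uib: "\<bar>ui t\<bar> \<le> C" for t unfolding ui_def using abs_Im_le_cmod[of "H t"] Hb[of t] by linarith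
  define \<rho> where "\<rho> x = (Dp \<psi> n x)^2 / fact n" for x
  define Sr where "Sr x = (\<Sum>a<n. ur (x a))" for x
  define Si where "Si x = (\<Sum>a<n. ui (x a))" for x
  define mr where "mr = (\<integral>x. \<rho> x * Sr x \<partial>PB)"
  define mi where "mi = (\<integral>x. \<rho> x * Si x \<partial>PB)"
  have \<rho>m: "\<rho> \<in> borel_measurable PB" unfolding \<rho>_def[abs_def] by measurable
  have Hm': "H \<in> borel_measurable \<mu>" using Hm by (simp only: meas_mu)
  have "(\<lambda>x. H (x a)) \<in> borel_measurable PB" if "a \<in> {..<n}" for a
    by (rule measurable_compose[OF measurable_component_singleton[OF that] Hm'])
  then have Xm: "(\<lambda>x. \<Sum>j<n. H (x j)) \<in> borel_measurable PB" by (rule borel_measurable_sum)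
  have Srm: "Sr \<in> borel_measurable PB" unfolding Sr_def[abs_def] using S_meas[OF urm] .
  have Sim: "Si \<in> borel_measurable PB" unfolding Si_def[abs_def] using S_meas[OF uim] .
  have "(\<lambda>x. \<rho> x * Sr x) = (\<lambda>x. (1 / fact n) * ((Dp \<psi> n x)^2 * (\<Sum>a<n. ur (x a))))"
    by (auto simp: \<rho>_def Sr_def)
  then have ir: "integrable PB (\<lambda>x. \<rho> x * Sr x)"
    using V1(1)[OF urm urb] by simp
  have "(\<lambda>x. \<rho> x * Si x) = (\<lambda>x. (1 / fact n) * ((Dp \<psi> n x)^2 * (\<Sum>a<n. ui (x a))))"
    by (auto simp: \<rho>_def Si_def)
  then have ii: "integrable PB (\<lambda>x. \<rho> x * Si x)"
    using V1(1)[OF uim uib] by simp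
  have cir: "integrable PB (\<lambda>x. complex_of_real (\<rho> x * Sr x))" using ir by (simp only: complex_of_real_integrable_eq)
  have cii: "integrable PB (\<lambda>x. \<i> * complex_of_real (\<rho> x * Si x))" using ii
    by (intro integrable_mult_right) (simp only: complex_of_real_integrable_eq)
  have X_eq: "\<rho> x *\<^sub>R (\<Sum>j<n. H (x j)) = complex_of_real (\<rho> x * Sr x) + \<i> * complex_of_real (\<rho> x * Si x)" for x
    by (rule complex_eqI) (simp_all add: Sr_def Si_def ur_def ui_def Re_sum Im_sum)
  have m_eq: "(\<integral>x. (\<Sum>j<n. H (x j)) \<partial>density PB (\<lambda>x. ennreal (\<rho> x))) = complex_of_real mr + \<i> * complex_of_real mi"
  proof -
    have "(\<integral>x. (\<Sum>j<n. H (x j)) \<partial>density PB (\<lambda>x. ennreal (\<rho> x))) = (\<integral>x. \<rho> x *\<^sub>R (\<Sum>j<n. H (x j)) \<partial>PB)"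
      by (rule integral_density) (use Xm \<rho>m in \<open>auto simp: \<rho>_def\<close>)
    also have "\<dots> = (\<integral>x. complex_of_real (\<rho> x * Sr x) + \<i> * complex_of_real (\<rho> x * Si x) \<partial>PB)"
      unfolding X_eq ..
    also have "\<dots> = complex_of_real mr + \<i> * complex_of_real mi"
      by (simp only: Bochner_Integration.integral_add[OF cir cii] integral_mult_right_zero integral_complex_of_real mr_def mi_def)
    finally show ?thesis .
  qed
  have pt: "(cmod ((\<Sum>j<n. H (x j)) - (complex_of_real mr + \<i> * complex_of_real mi)))^2 = (Sr x - mr)^2 + (Si x - mi)^2" for x
    unfolding cmod_power2 by (simp add: Sr_def Si_def ur_def ui_def Re_sum Im_sum)
  have "cvariance (density PB (\<lambda>x. ennreal (\<rho> x))) (\<lambda>x. \<Sum>j<n. H (x j)) =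
     (\<integral>x. (cmod ((\<Sum>j<n. H (x j)) - (complex_of_real mr + \<i> * complex_of_real mi)))^2 \<partial>density PB (\<lambda>x. ennreal (\<rho> x)))"
    unfolding cvariance_def m_eq ..
  also have "\<dots> = (\<integral>x. \<rho> x * ((Sr x - mr)^2 + (Si x - mi)^2) \<partial>PB)"
    unfolding pt by (subst integral_density) (use Srm Sim \<rho>m in \<open>auto simp: \<rho>_def\<close>)
  also have "\<dots> = (\<integral>x. \<rho> x * (Sr x - mr)^2 \<partial>PB) + (\<integral>x. \<rho> x * (Si x - mi)^2 \<partial>PB)"
    using Var_int[OF urm urb, of mr] Var_int[OF uim uib, of mi]
    unfolding \<rho>_def Sr_def Si_def by (simp add: distrib_left)
  also have "\<dots> = Qf ur + Qf ui"
    using Var_formula[OF urm urb] Var_formula[OF uim uib] unfolding \<rho>_def Sr_def Si_def mr_def mi_def by simp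
  finally show ?thesis unfolding \<rho>_def ur_def ui_def .
qed

end

context ope_setup
begin

definition nu :: "nat \<Rightarrow> real" where "nu i = (\<integral>t. (poly (gs \<mu> i) t)^2 \<partial>\<mu>)"

lemma nu_nonneg: "nu i \<ge> 0" unfolding nu_def by simp

lemma ip_gs: "ip (gs \<mu>) (\<lambda>_. 1) a b = (if a = b then nu a else 0)"
proof -
  have "ip (gs \<mu>) (\<lambda>_. 1) a b = (\<integral>t. poly (gs \<mu> a) t * poly (gs \<mu> b) t \<partial>\<mu>)" unfolding ip_def by simp
  also have "\<dots> = (if a = b then nu a else 0)"
  proof (cases "a = b")
    case True then show ?thesis by (simp add: nu_def power2_eq_square)
  next
    case False
    then show ?thesis
    proof (cases "a < b")
      case True then show ?thesis using gs_orth[of a b] by (simp add: mult.commute)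
    next
      case False then show ?thesis using gs_orth[of b a] \<open>a \<noteq> b\<close> by simp
    qed
  qed
  finally show ?thesis .
qed

lemma weight_eq: "ope_weight n x = (Dp (gs \<mu>) n x)^2"
  unfolding Dp_def by (rule ope_weight_det) (use gs_deg in auto)

lemma partition_eq: "ope_partition \<mu> n = fact n * (\<Prod>i<n. nu i)"
proof -
  have m: "\<And>j::nat. (\<lambda>_::real. 1::real) \<in> borel_measurable borel" by simp
  have b: "\<And>j::nat. \<And>t::real. \<bar>(\<lambda>_::real. 1::real) t\<bar> \<le> 1" by simp
  have "ope_partition \<mu> n = (\<integral>x. (Dp (gs \<mu>) n x)^2 \<partial>PiM {..<n} (\<lambda>_. \<mu>))"
    unfolding ope_partition_def ope_base_def weight_eq ..
  also have "\<dots> = (\<Sum>p | p permutes {..<n}. \<Sum>q | q permutes {..<n}. of_int (sign p * sign q) *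
         (\<Prod>j<n. ip (gs \<mu>) (\<lambda>_. 1) (p j) (q j)))" using L1(2)[OF m b, where \<psi>="gs \<mu>" and n=n] by simp
  also have "\<dots> = (\<Sum>p | p permutes {..<n}. \<Prod>j<n. ip (gs \<mu>) (\<lambda>_. 1) (p j) (p j))"
    by (intro sum.cong refl G1[where a=n]) (auto simp: ip_gs)
  also have "\<dots> = (\<Sum>p | p permutes {..<n}. \<Prod>i<n. nu i)"
  proof (rule sum.cong[OF refl])
    fix p assume "p \<in> {p. p permutes {..<n}}"
    then have p: "p permutes {..<n}" by simp
    have "(\<Prod>j<n. ip (gs \<mu>) (\<lambda>_. 1) (p j) (p j)) = (\<Prod>j<n. nu (p j))" by (simp add: ip_gs)
    also have "\<dots> = (\<Prod>i<n. nu i)" using prod.permute[OF p, of nu] by simp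
    finally show "(\<Prod>j<n. ip (gs \<mu>) (\<lambda>_. 1) (p j) (p j)) = (\<Prod>i<n. nu i)" .
  qed
  finally show ?thesis by (simp add: card_permutations)
qed

definition psi :: "nat \<Rightarrow> real poly" where "psi i = Polynomial.smult (1 / sqrt (nu i)) (gs \<mu> i)"

lemma normalized:
  assumes pos: "\<And>i. i < n \<Longrightarrow> nu i > 0"
  shows "ope_on \<mu> psi n"
    "ope_weight n x / ope_partition \<mu> n = (Dp psi n x)^2 / fact n"
proof -
  show "ope_on \<mu> psi n"
  proof unfold_locales
    fix a b assume ab: "a < n" "b < n"
    have "(\<integral>t. poly (psi a) t * poly (psi b) t \<partial>\<mu>) = (1 / sqrt (nu a)) * (1 / sqrt (nu b)) * ip (gs \<mu>) (\<lambda>_. 1) a b"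
      unfolding psi_def ip_def by (simp add: mult_ac)
    also have "\<dots> = (if a = b then 1 else 0)"
      using pos[OF ab(1)] by (cases "a = b") (simp_all add: ip_gs)
    finally show "(\<integral>t. poly (psi a) t * poly (psi b) t \<partial>\<mu>) = (if a = b then 1 else 0)" .
  qed
  have D: "Dp (gs \<mu>) n x = (\<Prod>i<n. sqrt (nu i)) * Dp psi n x"
    unfolding Dp_def sum_distrib_left
  proof (rule sum.cong[OF refl])
    fix p assume "p \<in> {p. p permutes {..<n}}"
    then have p: "p permutes {..<n}" by simp
    have "(\<Prod>j<n. poly (gs \<mu> (p j)) (x j)) = (\<Prod>j<n. sqrt (nu (p j)) * poly (psi (p j)) (x j))"
    proof (rule prod.cong[OF refl])
      fix j assume "j \<in> {..<n}"
      then have "nu (p j) > 0" using pos perm_bound[OF p] by auto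
      then show "poly (gs \<mu> (p j)) (x j) = sqrt (nu (p j)) * poly (psi (p j)) (x j)"
        unfolding psi_def by simp
    qed
    also have "\<dots> = (\<Prod>j<n. sqrt (nu (p j))) * (\<Prod>j<n. poly (psi (p j)) (x j))" by (rule prod.distrib)
    also have "(\<Prod>j<n. sqrt (nu (p j))) = (\<Prod>i<n. sqrt (nu i))"
      using prod.permute[OF p, of "\<lambda>i. sqrt (nu i)"] by simp
    finally show "of_int (sign p) * (\<Prod>j<n. poly (gs \<mu> (p j)) (x j)) =
       (\<Prod>i<n. sqrt (nu i)) * (of_int (sign p) * (\<Prod>j<n. poly (psi (p j)) (x j)))" by simp
  qed
  have sq: "(\<Prod>i<n. sqrt (nu i))^2 = (\<Prod>i<n. nu i)"
    by (simp add: prod_power_distrib nu_nonneg)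
  have "\<forall>i\<in>{..<n}. nu i \<noteq> 0" using pos by force
  then have nz: "(\<Prod>i<n. nu i) \<noteq> 0" by simp
  show "ope_weight n x / ope_partition \<mu> n = (Dp psi n x)^2 / fact n"
    unfolding weight_eq partition_eq D power_mult_distrib sq using nz by simp
qed

end

lemma Lw_quot_le:
  assumes f: "f \<in> Lw" and xy: "x \<noteq> y"
  shows "sqrt (1 + x^2) * sqrt (1 + y^2) * \<bar>(f x - f y) / (x - y)\<bar> \<le> Lw_norm f"
proof -
  have m: "sqrt (1 + x^2) * sqrt (1 + y^2) * \<bar>(f x - f y) / (x - y)\<bar> \<in> Lw_quot_set f"
    unfolding Lw_quot_set_def mem_Collect_eq
    using xy by (intro exI[of _ x] exI[of _ y]) simp
  have b: "bdd_above (Lw_quot_set f)" using f by (simp add: Lw_def)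
  show ?thesis unfolding Lw_norm_def by (rule cSup_upper[OF m b])
qed

lemma Lw_norm_nonneg: assumes "f \<in> Lw" shows "Lw_norm f \<ge> 0"
proof -
  have "0 \<le> sqrt (1 + 0^2) * sqrt (1 + 1^2) * \<bar>(f 0 - f 1) / (0 - 1)\<bar>" by simp
  then show ?thesis using Lw_quot_le[OF assms, of 0 1] by linarith
qed

lemma Lw_sq:
  assumes f: "f \<in> Lw"
  shows "(f x - f y)^2 \<le> (Lw_norm f)^2 * ((x - y)^2 / ((1 + x^2) * (1 + y^2)))"
proof (cases "x = y")
  case True then show ?thesis by simp
next
  case False
  define q where "q = sqrt (1 + x^2) * sqrt (1 + y^2)"
  have q0: "q > 0" unfolding q_def by (simp add: add_pos_nonneg)
  have qq: "q^2 = (1 + x^2) * (1 + y^2)" unfolding q_def by (simp add: power_mult_distrib add_nonneg_nonneg)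
  have "q * \<bar>(f x - f y) / (x - y)\<bar> \<le> Lw_norm f" using Lw_quot_le[OF f False] by (simp add: q_def)
  then have "q * \<bar>f x - f y\<bar> \<le> Lw_norm f * \<bar>x - y\<bar>"
    using False by (simp add: abs_divide field_simps)
  then have "(q * \<bar>f x - f y\<bar>)^2 \<le> (Lw_norm f * \<bar>x - y\<bar>)^2"
    by (rule power_mono) (use q0 in simp)
  then have "q^2 * (f x - f y)^2 \<le> (Lw_norm f)^2 * (x - y)^2"
    by (simp add: power_mult_distrib)
  then have "(f x - f y)^2 \<le> (Lw_norm f)^2 * (x - y)^2 / q^2"
    using q0 by (simp add: field_simps)
  then show ?thesis unfolding qq by simp
qed

lemma quot_le_4: "(x - y)^2 / ((1 + x^2) * (1 + y^2)) \<le> (4::real)"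
proof -
  have id: "4 * ((1 + x^2) * (1 + y^2)) - (x - y)^2 = 4 + 2*x^2 + 2*y^2 + (x+y)^2 + 4*(x*y)^2"
    by (simp add: power2_eq_square algebra_simps)
  have "0 \<le> 4 + 2*x^2 + 2*y^2 + (x+y)^2 + 4*(x*y)^2" by (simp add: add_nonneg_nonneg)
  then have "(x - y)^2 \<le> 4 * ((1 + x^2) * (1 + y^2))" using id by linarith
  moreover have "(1 + x^2) * (1 + y^2) > 0" by (simp add: add_pos_nonneg)
  ultimately show ?thesis by (simp add: divide_le_eq)
qed

lemma quot_le_sq: "(x - y)^2 / ((1 + x^2) * (1 + y^2)) \<le> ((x::real) - y)^2"
proof -
  have "(1 + x^2) * (1 + y^2) \<ge> 1 * 1" by (intro mult_mono) auto
  then show ?thesis by (simp add: divide_le_eq) (metis mult_left_mono mult.right_neutral zero_le_power2)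
qed

lemma Lw_lip: assumes f: "f \<in> Lw" shows "\<bar>f x - f y\<bar> \<le> Lw_norm f * \<bar>x - y\<bar>"
proof -
  have "(f x - f y)^2 \<le> (Lw_norm f)^2 * (x - y)^2"
    using Lw_sq[OF f, of x y] quot_le_sq[of x y] Lw_norm_nonneg[OF f]
    by (meson order_trans mult_left_mono zero_le_power2)
  then have "\<bar>f x - f y\<bar>^2 \<le> (Lw_norm f * \<bar>x - y\<bar>)^2" by (simp add: power_mult_distrib)
  then show ?thesis by (rule power2_le_imp_le) (use Lw_norm_nonneg[OF f] in simp)
qed

lemma Lw_diff_bound: assumes f: "f \<in> Lw" shows "\<bar>f x - f y\<bar> \<le> 2 * Lw_norm f"
proof -
  have "(f x - f y)^2 \<le> (Lw_norm f)^2 * 4"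
    using Lw_sq[OF f, of x y] quot_le_4[of x y]
    by (meson order_trans mult_left_mono zero_le_power2)
  then have "\<bar>f x - f y\<bar>^2 \<le> (2 * Lw_norm f)^2" by (simp add: power_mult_distrib mult.commute)
  then show ?thesis by (rule power2_le_imp_le) (use Lw_norm_nonneg[OF f] in simp)
qed

lemma Lw_bound: assumes f: "f \<in> Lw" shows "\<bar>f x\<bar> \<le> 2 * Lw_norm f + 1"
proof -
  have "(f \<longlongrightarrow> 0) at_bot" using f by (simp add: Lw_def)
  then have "eventually (\<lambda>y. dist (f y) 0 < 1) at_bot" by (rule tendstoD) simp
  then obtain N where "\<forall>y\<le>N. dist (f y) 0 < 1" by (auto simp: eventually_at_bot_linorder)
  then have "\<bar>f N\<bar> < 1" by (simp add: dist_real_def)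
  moreover have "\<bar>f x - f N\<bar> \<le> 2 * Lw_norm f" by (rule Lw_diff_bound[OF f])
  ultimately show ?thesis by linarith
qed

lemma Lw_cont: assumes f: "f \<in> Lw" shows "continuous_on UNIV f"
proof (rule lipschitz_on_continuous_on)
  show "(Lw_norm f)-lipschitz_on UNIV f"
    by (rule lipschitz_onI) (use Lw_lip[OF f] Lw_norm_nonneg[OF f] in \<open>auto simp: dist_real_def\<close>)
qed

lemma Lw_meas: assumes f: "f \<in> Lw" shows "f \<in> borel_measurable borel"
  using Lw_cont[OF f] by (rule borel_measurable_continuous_onI)

lemma g_Re: "Re (inverse (complex_of_real a - \<i>)) = a / (a^2 + 1)"
  by (simp add: power2_eq_square)

lemma g_Im: "Im (inverse (complex_of_real a - \<i>)) = 1 / (a^2 + 1)"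
  by (simp add: power2_eq_square)

lemma g_diff: "(a / (a^2 + 1) - b / (b^2 + 1))^2 + (1 / (a^2 + 1) - 1 / (b^2 + 1))^2
   = ((a::real) - b)^2 / ((1 + a^2) * (1 + b^2))"
proof -
  define A where "A = a^2 + 1"
  define B where "B = b^2 + 1"
  have pa: "A > 0" unfolding A_def by (smt (verit) zero_le_power2)
  have pb: "B > 0" unfolding B_def by (smt (verit) zero_le_power2)
  have e1: "a / A - b / B = (a * B - b * A) / (A * B)" using pa pb by (simp add: field_simps)
  have e2: "1 / A - 1 / B = (B - A) / (A * B)" using pa pb by (simp add: field_simps)
  have e3: "(a * B - b * A)^2 + (B - A)^2 = (a - b)^2 * (A * B)"
    unfolding A_def B_def by (simp add: power2_eq_square algebra_simps)
  have "(a / A - b / B)^2 + (1 / A - 1 / B)^2 = ((a * B - b * A)^2 + (B - A)^2) / (A * B)^2"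
    unfolding e1 e2 by (simp add: power_divide add_divide_distrib)
  also have "\<dots> = (a - b)^2 / (A * B)" unfolding e3 using pa pb by (simp add: power2_eq_square)
  finally show ?thesis unfolding A_def B_def by (simp add: add.commute)
qed


lemma G_bound: "cmod (inverse (complex_of_real r - \<i>)) \<le> 1"
proof -
  have "1 \<le> cmod (complex_of_real r - \<i>)" using abs_Im_le_cmod[of "complex_of_real r - \<i>"] by simp
  then show ?thesis by (simp add: norm_inverse inverse_le_1_iff)
qed

theorem proposition5p1:
  fixes \<mu> :: "real measure" and x0 \<alpha> :: real and f :: "real \<Rightarrow> real" and n :: nat
  assumes "sets \<mu> = sets borel"
    and "finite_moments \<mu>"
    and "0 < \<alpha>" and "\<alpha> < 1"
    and "f \<in> Lw"
  shows "cvariance (OPE \<mu> n) (lin_stat (\<lambda>x. complex_of_real (f x)) \<alpha> x0 n)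
         \<le> (Lw_norm f)^2 * cvariance (OPE \<mu> n) (lin_stat (\<lambda>x. inverse (complex_of_real x - \<i>)) \<alpha> x0 n)"
proof -
  interpret ope_setup \<mu>
    using assms(1,2) by unfold_locales (auto simp: finite_moments_def)
  define c where "c = real n powr \<alpha>"
  define F where "F t = f (c * (t - x0))" for t
  define G where "G t = inverse (complex_of_real (c * (t - x0)) - \<i>)" for t
  define N where "N = Lw_norm f"
  have LF: "lin_stat (\<lambda>x. complex_of_real (f x)) \<alpha> x0 n = (\<lambda>x. \<Sum>j<n. complex_of_real (F (x j)))"
    by (auto simp: lin_stat_def F_def c_def)
  have LG: "lin_stat (\<lambda>x. inverse (complex_of_real x - \<i>)) \<alpha> x0 n = (\<lambda>x. \<Sum>j<n. G (x j))"
    by (auto simp: lin_stat_def G_def c_def)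
  have N0: "N \<ge> 0" unfolding N_def by (rule Lw_norm_nonneg[OF assms(5)])
  have cv0: "0 \<le> cvariance M X" for M :: "(nat \<Rightarrow> real) measure" and X
    unfolding cvariance_def by (rule Bochner_Integration.integral_nonneg) simp
  show ?thesis
  proof (cases "\<forall>i<n. nu i > 0")
    case True
    then have pos: "\<And>i. i < n \<Longrightarrow> nu i > 0" by blast
    interpret O: ope_on \<mu> psi n by (rule normalized(1)[OF pos])
    have OPE_eq: "OPE \<mu> n = density (PiM {..<n} (\<lambda>_. \<mu>)) (\<lambda>x. ennreal ((Dp psi n x)^2 / fact n))"
      unfolding OPE_def ope_base_def using normalized(2)[OF pos] by simp
    have fm: "f \<in> borel_measurable borel" by (rule Lw_meas[OF assms(5)])
    have Fm: "F \<in> borel_measurable borel" unfolding F_def[abs_def] using fm by measurable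
    have Fb: "\<bar>F t\<bar> \<le> 2 * N + 1" for t unfolding F_def N_def by (rule Lw_bound[OF assms(5)])
    have HFm: "(\<lambda>t. complex_of_real (F t)) \<in> borel_measurable borel" using Fm by measurable
    have HFb: "cmod (complex_of_real (F t)) \<le> 2 * N + 1" for t using Fb[of t] by simp
    have Gm: "G \<in> borel_measurable borel" unfolding G_def[abs_def] by measurable
    have Gb: "cmod (G t) \<le> 1" for t unfolding G_def by (rule G_bound)
    have Grm: "(\<lambda>t. Re (G t)) \<in> borel_measurable borel" using Gm by measurable
    have Gim: "(\<lambda>t. Im (G t)) \<in> borel_measurable borel" using Gm by measurable
    have Grb: "\<bar>Re (G t)\<bar> \<le> 1" for t using abs_Re_le_cmod[of "G t"] Gb[of t] by linarith
    have Gib: "\<bar>Im (G t)\<bar> \<le> 1" for t using abs_Im_le_cmod[of "G t"] Gb[of t] by linarith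
    have Q0: "O.Qf (\<lambda>t. 0) = 0" unfolding O.Qf_def ip_def by simp
    have lhs: "cvariance (OPE \<mu> n) (lin_stat (\<lambda>x. complex_of_real (f x)) \<alpha> x0 n) = O.Qf F"
      unfolding LF OPE_eq O.cvar_formula[OF HFm HFb] using Q0 by simp
    have rhs: "cvariance (OPE \<mu> n) (lin_stat (\<lambda>x. inverse (complex_of_real x - \<i>)) \<alpha> x0 n)
        = O.Qf (\<lambda>t. Re (G t)) + O.Qf (\<lambda>t. Im (G t))"
      unfolding LG OPE_eq by (rule O.cvar_formula[OF Gm Gb])
    have H: "(F s - F t)^2 \<le> N^2 * ((Re (G s) - Re (G t))^2 + (Im (G s) - Im (G t))^2)" for s t
    proof -
      define a where "a = c * (s - x0)"
      define b where "b = c * (t - x0)"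
      have "(Re (G s) - Re (G t))^2 + (Im (G s) - Im (G t))^2 = (a - b)^2 / ((1 + a^2) * (1 + b^2))"
        unfolding G_def g_Re g_Im a_def[symmetric] b_def[symmetric] by (rule g_diff)
      moreover have "(F s - F t)^2 \<le> N^2 * ((a - b)^2 / ((1 + a^2) * (1 + b^2)))"
        unfolding F_def a_def[symmetric] b_def[symmetric] N_def by (rule Lw_sq[OF assms(5)])
      ultimately show ?thesis by simp
    qed
    have "O.Qf F \<le> N^2 * (O.Qf (\<lambda>t. Re (G t)) + O.Qf (\<lambda>t. Im (G t)))"
      by (rule O.Qf_mono[OF Fm Fb Grm Grb Gim Gib _ H]) simp
    then show ?thesis unfolding lhs rhs N_def .
  next
    case False
    then obtain i where i: "i < n" "\<not> nu i > 0" by blast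
    then have "nu i = 0" using nu_nonneg[of i] by simp
    then have "(\<Prod>i<n. nu i) = 0" using i by (intro prod_zero) auto
    then have Z: "ope_partition \<mu> n = 0" by (simp add: partition_eq)
    have "OPE \<mu> n = null_measure (ope_base \<mu> n)"
      unfolding OPE_def Z null_measure_eq_density by simp
    then have "cvariance (OPE \<mu> n) (lin_stat (\<lambda>x. complex_of_real (f x)) \<alpha> x0 n) = 0"
      unfolding cvariance_def by (simp add: integral_null_measure)
    moreover have "0 \<le> (Lw_norm f)^2 * cvariance (OPE \<mu> n) (lin_stat (\<lambda>x. inverse (complex_of_real x - \<i>)) \<alpha> x0 n)"
      using cv0 by simp
    ultimately show ?thesis by simp
  qed
qed

end
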